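(* Let $\mathcal{C}$ be a finite direct category of composition length $N\ge1$. Then $\mathsf{E}^n(\mathcal{C},k)=\mathsf{G}^n(\mathcal{C},k)=0$ for all $n>N$. Moreover, the map $\mathsf{G}^n(\mathcal{C},k)\to H^n(|\mathcal{C}|;\mathbb{Z})$ induced by the cochain map sending $[M]\in\mathrm{Gr}(k\mathcal{G}^{\mathcal{C}}_n)$ to the normalized cochain $\sigma\mapsto\dim_kM(\sigma)$ on non-degenerate $n$-simplices $\sigma$ of the nerve is an isomorphism for all $n\ge\lfloor N/2\rfloor+1$ and an epimorphism for $1\le n\le\lfloor N/2\rfloor$.
   Context: A small category is direct if it has no infinite chain of composable non-identity morphisms and no cycle of non-identity morphisms of positive length. A morphism is irreducible if it is not an identity and in any factorization one factor is an identity; the composition length is the maximal length of a chain of composable irreducible morphisms. Fix a field $k$; modules are functors to finite-dimensional $k$-vector spaces, $\mathrm{Gr}$ is the split Grothendieck group, $F^*M=M\circ F$. For $n\ge0$, $\widetilde{\mathcal{E}}^{\mathcal{C}}_n=\mathcal{C}^{[n]}$ has objects strings $[u_1|\cdots|u_n]$ = $x_0\xrightarrow{u_1}\cdots\xrightarrow{u_n}x_n$ and morphisms commutative ladders $(f_0,\dots,f_n)$; faces $\partial_i$ delete $x_i$ (composing $u_{i+1}u_i$ for $0<i<n$). $\widetilde{\mathcal{G}}^{\mathcal{C}}_n$ has the same objects and as morphisms the identities and, for each $w:x_n\to y_0$, the ladder $f_i=v_i\cdots v_1\,w\,u_n\cdots u_{i+1}$. A string is non-degenerate if no $u_i$ is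 an identity. $\mathcal{E}^{\mathcal{C}}_n$, $\mathcal{G}^{\mathcal{C}}_n$ are the full subcategories of $\widetilde{\mathcal{E}}^{\mathcal{C}}_n$, $\widetilde{\mathcal{G}}^{\mathcal{C}}_n$ on non-degenerate strings ($\mathcal{C}$ itself for $n=0$); with the restricted faces they are semi-simplicial objects, and $\mathsf{E}^*(\mathcal{C},k)$, $\mathsf{G}^*(\mathcal{C},k)$ denote the cohomology of $(\mathrm{Gr}(k\mathcal{E}^{\mathcal{C}}_\bullet),d)$, $(\mathrm{Gr}(k\mathcal{G}^{\mathcal{C}}_\bullet),d)$ with $d^n=\sum_{i=0}^{n+1}(-1)^i\partial_i^*$. *)

theory Defs
  imports Main "Jordan_Normal_Form.Matrix"
begin

record ('o, 'a) cat =
  Ob :: "'o set"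
  Ar :: "'a set"
  Dom :: "'a \<Rightarrow> 'o"
  Cod :: "'a \<Rightarrow> 'o"
  Idm :: "'o \<Rightarrow> 'a"
  Comp :: "'a \<Rightarrow> 'a \<Rightarrow> 'a"   (* Comp g f = g o f *)

definition is_cat :: "('o, 'a, 'z) cat_scheme \<Rightarrow> bool" where
  "is_cat C \<longleftrightarrow>
     (\<forall>a\<in>Ar C. Dom C a \<in> Ob C \<and> Cod C a \<in> Ob C) \<and>
     (\<forall>x\<in>Ob C. Idm C x \<in> Ar C \<and> Dom C (Idm C x) = x \<and> Cod C (Idm C x) = x) \<and>
     (\<forall>f\<in>Ar C. \<forall>g\<in>Ar C. Cod C f = Dom C g \<longrightarrow>
        Comp C g f \<in> Ar C \<and> Dom C (Comp C g f) = Dom C f \<and> Cod C (Comp C g f) = Cod C g) \<and>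
     (\<forall>f\<in>Ar C. Comp C (Idm C (Cod C f)) f = f \<and> Comp C f (Idm C (Dom C f)) = f) \<and>
     (\<forall>f\<in>Ar C. \<forall>g\<in>Ar C. \<forall>h\<in>Ar C. Cod C f = Dom C g \<longrightarrow> Cod C g = Dom C h \<longrightarrow>
        Comp C h (Comp C g f) = Comp C (Comp C h g) f)"

definition finite_cat :: "('o, 'a, 'z) cat_scheme \<Rightarrow> bool" where
  "finite_cat C \<longleftrightarrow> finite (Ob C) \<and> finite (Ar C)"

definition non_id :: "('o, 'a, 'z) cat_scheme \<Rightarrow> 'a \<Rightarrow> bool" where
  "non_id C a \<longleftrightarrow> a \<in> Ar C \<and> a \<noteq> Idm C (Dom C a)"

definition composable :: "('o, 'a, 'z) cat_scheme \<Rightarrow> 'a list \<Rightarrow> bool" where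
  "composable C ms \<longleftrightarrow> (\<forall>i. Suc i < length ms \<longrightarrow> Cod C (ms ! i) = Dom C (ms ! Suc i))"

definition direct :: "('o, 'a, 'z) cat_scheme \<Rightarrow> bool" where
  "direct C \<longleftrightarrow>
     \<not> (\<exists>f :: nat \<Rightarrow> 'a. \<forall>i. non_id C (f i) \<and> Cod C (f i) = Dom C (f (Suc i))) \<and>
     \<not> (\<exists>ms. ms \<noteq> [] \<and> (\<forall>m\<in>set ms. non_id C m) \<and> composable C ms \<and>
            Cod C (last ms) = Dom C (hd ms))"

definition irreducible :: "('o, 'a, 'z) cat_scheme \<Rightarrow> 'a \<Rightarrow> bool" where
  "irreducible C a \<longleftrightarrow> non_id C a \<and>
     (\<forall>f\<in>Ar C. \<forall>g\<in>Ar C. Cod C f = Dom C g \<and> Comp C g f = a \<longrightarrow>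
        f = Idm C (Dom C f) \<or> g = Idm C (Dom C g))"

definition irr_chain :: "('o, 'a, 'z) cat_scheme \<Rightarrow> 'a list \<Rightarrow> bool" where
  "irr_chain C ms \<longleftrightarrow> (\<forall>m\<in>set ms. irreducible C m) \<and> composable C ms"

definition comp_length :: "('o, 'a, 'z) cat_scheme \<Rightarrow> nat" where
  "comp_length C = Max {length ms | ms. irr_chain C ms}"

text \<open>Composite of a composable path [m1,...,mk] (m1 first): mk o ... o m1.\<close>
fun path_comp :: "('o, 'a, 'z) cat_scheme \<Rightarrow> 'a list \<Rightarrow> 'a" where
  "path_comp C [] = undefined"
| "path_comp C (m # ms) = fold (\<lambda>g acc. Comp C g acc) ms m"

text \<open>A string [u_1|...|u_n] is encoded as (x_0, [u_1,...,u_n]).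
  A morphism (ladder) is encoded as (source, target, [f_0,...,f_n]).\<close>

type_synonym ('o, 'a) str = "'o \<times> 'a list"
type_synonym ('o, 'a) lad = "('o, 'a) str \<times> ('o, 'a) str \<times> 'a list"

definition obj_at :: "('o, 'a, 'z) cat_scheme \<Rightarrow> ('o, 'a) str \<Rightarrow> nat \<Rightarrow> 'o" where
  "obj_at C s i = (if i = 0 then fst s else Cod C (snd s ! (i - 1)))"

definition is_string :: "('o, 'a, 'z) cat_scheme \<Rightarrow> nat \<Rightarrow> ('o, 'a) str \<Rightarrow> bool" where
  "is_string C n s \<longleftrightarrow> fst s \<in> Ob C \<and> length (snd s) = n \<and> (\<forall>u\<in>set (snd s). u \<in> Ar C) \<and>
     composable C (snd s) \<and> (n > 0 \<longrightarrow> Dom C (hd (snd s)) = fst s)"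

definition nondeg_strings :: "('o, 'a, 'z) cat_scheme \<Rightarrow> nat \<Rightarrow> ('o, 'a) str set" where
  "nondeg_strings C n = {s. is_string C n s \<and> (\<forall>u\<in>set (snd s). u \<noteq> Idm C (Dom C u))}"

definition is_ladder :: "('o, 'a, 'z) cat_scheme \<Rightarrow> nat \<Rightarrow> ('o, 'a) lad \<Rightarrow> bool" where
  "is_ladder C n l \<longleftrightarrow> (case l of (s, t, fs) \<Rightarrow>
     length fs = Suc n \<and>
     (\<forall>i\<le>n. fs ! i \<in> Ar C \<and> Dom C (fs ! i) = obj_at C s i \<and> Cod C (fs ! i) = obj_at C t i) \<and>
     (\<forall>i. 1 \<le> i \<and> i \<le> n \<longrightarrow>
        Comp C (snd t ! (i - 1)) (fs ! (i - 1)) = Comp C (fs ! i) (snd s ! (i - 1))))"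

definition id_ladder :: "('o, 'a, 'z) cat_scheme \<Rightarrow> ('o, 'a) str \<Rightarrow> ('o, 'a) lad" where
  "id_ladder C s = (s, s, map (\<lambda>i. Idm C (obj_at C s i)) [0..<Suc (length (snd s))])"

definition comp_ladder :: "('o, 'a, 'z) cat_scheme \<Rightarrow> ('o, 'a) lad \<Rightarrow> ('o, 'a) lad \<Rightarrow> ('o, 'a) lad" where
  "comp_ladder C g f = (fst f, fst (snd g), map2 (Comp C) (snd (snd g)) (snd (snd f)))"

text \<open>The ladder associated with w : x_n -> y_0: f_i = v_i...v_1 w u_n...u_{i+1}.\<close>
definition w_ladder :: "('o, 'a, 'z) cat_scheme \<Rightarrow> ('o, 'a) str \<Rightarrow> ('o, 'a) str \<Rightarrow> 'a \<Rightarrow> ('o, 'a) lad" where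
  "w_ladder C s t w = (s, t, map (\<lambda>i. path_comp C (drop i (snd s) @ [w] @ take i (snd t)))
                              [0..<Suc (length (snd s))])"

definition E_cat :: "('o, 'a, 'z) cat_scheme \<Rightarrow> nat \<Rightarrow> (('o, 'a) str, ('o, 'a) lad) cat" where
  "E_cat C n = \<lparr> Ob = nondeg_strings C n,
     Ar = {l. fst l \<in> nondeg_strings C n \<and> fst (snd l) \<in> nondeg_strings C n \<and> is_ladder C n l},
     Dom = fst, Cod = (\<lambda>l. fst (snd l)), Idm = id_ladder C, Comp = comp_ladder C \<rparr>"

definition G_cat :: "('o, 'a, 'z) cat_scheme \<Rightarrow> nat \<Rightarrow> (('o, 'a) str, ('o, 'a) lad) cat" where
  "G_cat C n = \<lparr> Ob = nondeg_strings C n,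
     Ar = {id_ladder C s | s. s \<in> nondeg_strings C n} \<union>
          {w_ladder C s t w | s t w. s \<in> nondeg_strings C n \<and> t \<in> nondeg_strings C n \<and>
             w \<in> Ar C \<and> Dom C w = obj_at C s n \<and> Cod C w = obj_at C t 0},
     Dom = fst, Cod = (\<lambda>l. fst (snd l)), Idm = id_ladder C, Comp = comp_ladder C \<rparr>"

text \<open>Face \<partial>_i on strings of length m = n+1 (deletes x_i), 0 \<le> i \<le> m.\<close>
definition face_str :: "('o, 'a, 'z) cat_scheme \<Rightarrow> nat \<Rightarrow> ('o, 'a) str \<Rightarrow> ('o, 'a) str" where
  "face_str C i s = (case s of (x0, us) \<Rightarrow>
     if i = 0 then (Cod C (hd us), tl us)
     else if i = length us then (x0, butlast us)
     else (x0, take (i - 1) us @ [Comp C (us ! i) (us ! (i - 1))] @ drop (Suc i) us))"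

definition face_lad :: "('o, 'a, 'z) cat_scheme \<Rightarrow> nat \<Rightarrow> ('o, 'a) lad \<Rightarrow> ('o, 'a) lad" where
  "face_lad C i l = (case l of (s, t, fs) \<Rightarrow>
     (face_str C i s, face_str C i t, take i fs @ drop (Suc i) fs))"

text \<open>A module over D (functor to finite-dimensional k-vector spaces) is given, up to the
  canonical skeleton of finite-dimensional k-vector spaces, by a dimension for each object and
  a matrix for each morphism.\<close>
type_synonym ('o, 'a, 'k) module = "('o \<Rightarrow> nat) \<times> ('a \<Rightarrow> 'k mat)"

definition is_module :: "'k::field itself \<Rightarrow> ('o, 'a, 'z) cat_scheme \<Rightarrow> ('o, 'a, 'k) module \<Rightarrow> bool" where
  "is_module K D M \<longleftrightarrow> (case M of (d, \<rho>) \<Rightarrow>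
     (\<forall>a\<in>Ar D. \<rho> a \<in> carrier_mat (d (Cod D a)) (d (Dom D a))) \<and>
     (\<forall>x\<in>Ob D. \<rho> (Idm D x) = 1\<^sub>m (d x)) \<and>
     (\<forall>f\<in>Ar D. \<forall>g\<in>Ar D. Cod D f = Dom D g \<longrightarrow> \<rho> (Comp D g f) = \<rho> g * \<rho> f))"

definition Mods :: "'k::field itself \<Rightarrow> ('o, 'a, 'z) cat_scheme \<Rightarrow> ('o, 'a, 'k) module set" where
  "Mods K D = {M. is_module K D M}"

definition iso_mod :: "('o, 'a, 'z) cat_scheme \<Rightarrow> ('o, 'a, 'k::field) module \<Rightarrow> ('o, 'a, 'k) module \<Rightarrow> bool" where
  "iso_mod D M N \<longleftrightarrow> (\<exists>T. (\<forall>x\<in>Ob D. T x \<in> carrier_mat (fst N x) (fst M x) \<and> invertible_mat (T x)) \<and>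
     (\<forall>a\<in>Ar D. T (Cod D a) * snd M a = snd N a * T (Dom D a)))"

definition dsum :: "('o, 'a, 'z) cat_scheme \<Rightarrow> ('o, 'a, 'k::field) module \<Rightarrow> ('o, 'a, 'k) module \<Rightarrow> ('o, 'a, 'k) module" where
  "dsum D M1 M2 = ((\<lambda>x. fst M1 x + fst M2 x),
     (\<lambda>a. four_block_mat (snd M1 a) (0\<^sub>m (fst M1 (Cod D a)) (fst M2 (Dom D a)))
                         (0\<^sub>m (fst M2 (Cod D a)) (fst M1 (Dom D a))) (snd M2 a)))"

inductive_set zspan :: "('b \<Rightarrow> int) set \<Rightarrow> ('b \<Rightarrow> int) set" for S where
  zspan_zero: "(\<lambda>_. 0) \<in> zspan S"
| zspan_add: "x \<in> zspan S \<Longrightarrow> s \<in> S \<Longrightarrow> (\<lambda>b. x b + s b) \<in> zspan S"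
| zspan_diff: "x \<in> zspan S \<Longrightarrow> s \<in> S \<Longrightarrow> (\<lambda>b. x b - s b) \<in> zspan S"

definition gen :: "'b \<Rightarrow> 'b \<Rightarrow> int" where
  "gen M = (\<lambda>N. if N = M then 1 else 0)"

text \<open>Free abelian group on the modules over D, and the relation subgroup; the split
  Grothendieck group Gr(kD) is the quotient FG/Rel.\<close>
definition FG :: "'k::field itself \<Rightarrow> ('o, 'a, 'z) cat_scheme \<Rightarrow> (('o, 'a, 'k) module \<Rightarrow> int) set" where
  "FG K D = zspan {gen M | M. M \<in> Mods K D}"

definition Rel :: "'k::field itself \<Rightarrow> ('o, 'a, 'z) cat_scheme \<Rightarrow> (('o, 'a, 'k) module \<Rightarrow> int) set" where
  "Rel K D = zspan {(\<lambda>N. gen M N - gen M1 N - gen M2 N) | M M1 M2.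
      M \<in> Mods K D \<and> M1 \<in> Mods K D \<and> M2 \<in> Mods K D \<and> iso_mod D M (dsum D M1 M2)}"

definition lin_ext :: "('b \<Rightarrow> 'c) \<Rightarrow> ('b \<Rightarrow> int) \<Rightarrow> ('c \<Rightarrow> int)" where
  "lin_ext g x = (\<lambda>N. \<Sum>M\<in>{M. x M \<noteq> 0 \<and> g M = N}. x M)"

definition pb_face :: "('o, 'a, 'z) cat_scheme \<Rightarrow> nat \<Rightarrow> (('o, 'a) str, ('o, 'a) lad, 'k) module
                        \<Rightarrow> (('o, 'a) str, ('o, 'a) lad, 'k) module" where
  "pb_face C i M = (fst M \<circ> face_str C i, snd M \<circ> face_lad C i)"

definition dgr :: "('o, 'a, 'z) cat_scheme \<Rightarrow> nat \<Rightarrow> ((('o, 'a) str, ('o, 'a) lad, 'k) module \<Rightarrow> int)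
                   \<Rightarrow> ((('o, 'a) str, ('o, 'a) lad, 'k) module \<Rightarrow> int)" where
  "dgr C n x = (\<lambda>N. \<Sum>i\<le>Suc n. (-1) ^ i * lin_ext (pb_face C i) x N)"

text \<open>Cocycles and coboundaries of (Gr(k cat_\<bullet>), d), as subgroups of the free groups
  (preimages of the kernel and the image in Gr).\<close>
definition gr_cocycles :: "'k::field itself \<Rightarrow> ('o, 'a, 'z) cat_scheme \<Rightarrow>
    (nat \<Rightarrow> (('o, 'a) str, ('o, 'a) lad) cat) \<Rightarrow> nat \<Rightarrow> ((('o, 'a) str, ('o, 'a) lad, 'k) module \<Rightarrow> int) set" where
  "gr_cocycles K C cats n = {x \<in> FG K (cats n). dgr C n x \<in> Rel K (cats (Suc n))}"

definition gr_coboundaries :: "'k::field itself \<Rightarrow> ('o, 'a, 'z) cat_scheme \<Rightarrow>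
    (nat \<Rightarrow> (('o, 'a) str, ('o, 'a) lad) cat) \<Rightarrow> nat \<Rightarrow> ((('o, 'a) str, ('o, 'a) lad, 'k) module \<Rightarrow> int) set" where
  "gr_coboundaries K C cats n =
     (if n = 0 then Rel K (cats 0)
      else {(\<lambda>N. dgr C (n - 1) y N + r N) | y r. y \<in> FG K (cats (n - 1)) \<and> r \<in> Rel K (cats n)})"

definition gr_cohom_vanishes :: "'k::field itself \<Rightarrow> ('o, 'a, 'z) cat_scheme \<Rightarrow>
    (nat \<Rightarrow> (('o, 'a) str, ('o, 'a) lad) cat) \<Rightarrow> nat \<Rightarrow> bool" where
  "gr_cohom_vanishes K C cats n \<longleftrightarrow> gr_cocycles K C cats n \<subseteq> gr_coboundaries K C cats n"

text \<open>Non-degenerate n-simplices of the nerve = non-degenerate strings of length n.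
  Normalized integral cochains are functions vanishing off them.\<close>
definition nerve_cochains :: "('o, 'a, 'z) cat_scheme \<Rightarrow> nat \<Rightarrow> (('o, 'a) str \<Rightarrow> int) set" where
  "nerve_cochains C n = {c. \<forall>\<sigma>. \<sigma> \<notin> nondeg_strings C n \<longrightarrow> c \<sigma> = 0}"

definition nerve_delta :: "('o, 'a, 'z) cat_scheme \<Rightarrow> nat \<Rightarrow> (('o, 'a) str \<Rightarrow> int) \<Rightarrow> (('o, 'a) str \<Rightarrow> int)" where
  "nerve_delta C n c = (\<lambda>\<sigma>. if \<sigma> \<in> nondeg_strings C (Suc n)
      then \<Sum>i\<le>Suc n. (-1) ^ i * c (face_str C i \<sigma>) else 0)"

definition nerve_cocycles :: "('o, 'a, 'z) cat_scheme \<Rightarrow> nat \<Rightarrow> (('o, 'a) str \<Rightarrow> int) set" where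
  "nerve_cocycles C n = {c \<in> nerve_cochains C n. nerve_delta C n c = (\<lambda>_. 0)}"

definition nerve_coboundaries :: "('o, 'a, 'z) cat_scheme \<Rightarrow> nat \<Rightarrow> (('o, 'a) str \<Rightarrow> int) set" where
  "nerve_coboundaries C n =
     (if n = 0 then {\<lambda>_. 0} else nerve_delta C (n - 1) ` nerve_cochains C (n - 1))"

definition dim_cochain :: "('o, 'a, 'z) cat_scheme \<Rightarrow> nat \<Rightarrow> ((('o, 'a) str, ('o, 'a) lad, 'k) module \<Rightarrow> int)
                           \<Rightarrow> (('o, 'a) str \<Rightarrow> int)" where
  "dim_cochain C n x = (\<lambda>\<sigma>. if \<sigma> \<in> nondeg_strings C n
      then \<Sum>M\<in>{M. x M \<noteq> 0}. x M * int (fst M \<sigma>) else 0)"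

definition comparison_epi :: "'k::field itself \<Rightarrow> ('o, 'a, 'z) cat_scheme \<Rightarrow> nat \<Rightarrow> bool" where
  "comparison_epi K C n \<longleftrightarrow>
     (\<forall>c\<in>nerve_cocycles C n. \<exists>x\<in>gr_cocycles K C (G_cat C) n.
        (\<lambda>\<sigma>. dim_cochain C n x \<sigma> - c \<sigma>) \<in> nerve_coboundaries C n)"

definition comparison_mono :: "'k::field itself \<Rightarrow> ('o, 'a, 'z) cat_scheme \<Rightarrow> nat \<Rightarrow> bool" where
  "comparison_mono K C n \<longleftrightarrow>
     (\<forall>x\<in>gr_cocycles K C (G_cat C) n.
        dim_cochain C n x \<in> nerve_coboundaries C n \<longrightarrow> x \<in> gr_coboundaries K C (G_cat C) n)"

end

theory Submission imports Defs begin

lemma composable_Nil[simp]: "composable C []"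
  by (simp add: composable_def)
lemma composable_single[simp]: "composable C [a]"
  by (simp add: composable_def)
lemma all_nat_split: "(\<forall>i::nat. P i) \<longleftrightarrow> P 0 \<and> (\<forall>i. P (Suc i))"
  by (metis nat.exhaust)

lemma composable_Cons2[simp]:
  "composable C (a # b # ms) \<longleftrightarrow> Cod C a = Dom C b \<and> composable C (b # ms)"
  unfolding composable_def by (subst all_nat_split) simp

lemma composable_Cons:
  "composable C (a # ms) \<longleftrightarrow> (ms \<noteq> [] \<longrightarrow> Cod C a = Dom C (hd ms)) \<and> composable C ms"
  by (cases ms) auto

lemma composable_append:
  "composable C (xs @ ys) \<longleftrightarrow> composable C xs \<and> composable C ys \<and>
     (xs \<noteq> [] \<longrightarrow> ys \<noteq> [] \<longrightarrow> Cod C (last xs) = Dom C (hd ys))"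
proof (induction xs)
  case Nil then show ?case by simp
next
  case (Cons a xs)
  show ?case
  proof (cases xs)
    case Nil then show ?thesis by (cases ys) auto
  next
    case (Cons b zs) then show ?thesis using Cons.IH by auto
  qed
qed

lemma composable_take: "composable C ms \<Longrightarrow> composable C (take k ms)"
  by (metis append_take_drop_id composable_append)
lemma composable_drop: "composable C ms \<Longrightarrow> composable C (drop k ms)"
  by (metis append_take_drop_id composable_append)

locale dcat =
  fixes C :: "('o, 'a) cat"
  assumes cat: "is_cat C" and fin: "finite_cat C" and dir: "direct C"
begin

lemma Dom_Ar: "a \<in> Ar C \<Longrightarrow> Dom C a \<in> Ob C" using cat unfolding is_cat_def by blast
lemma Cod_Ar: "a \<in> Ar C \<Longrightarrow> Cod C a \<in> Ob C" using cat unfolding is_cat_def by blast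
lemma Idm_Ar: "x \<in> Ob C \<Longrightarrow> Idm C x \<in> Ar C" using cat unfolding is_cat_def by blast
lemma Dom_Idm[simp]: "x \<in> Ob C \<Longrightarrow> Dom C (Idm C x) = x" using cat unfolding is_cat_def by blast
lemma Cod_Idm[simp]: "x \<in> Ob C \<Longrightarrow> Cod C (Idm C x) = x" using cat unfolding is_cat_def by blast
lemma Comp_Ar: "f \<in> Ar C \<Longrightarrow> g \<in> Ar C \<Longrightarrow> Cod C f = Dom C g \<Longrightarrow> Comp C g f \<in> Ar C"
  using cat unfolding is_cat_def by blast
lemma Dom_Comp[simp]: "f \<in> Ar C \<Longrightarrow> g \<in> Ar C \<Longrightarrow> Cod C f = Dom C g \<Longrightarrow> Dom C (Comp C g f) = Dom C f"
  using cat unfolding is_cat_def by blast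
lemma Cod_Comp[simp]: "f \<in> Ar C \<Longrightarrow> g \<in> Ar C \<Longrightarrow> Cod C f = Dom C g \<Longrightarrow> Cod C (Comp C g f) = Cod C g"
  using cat unfolding is_cat_def by blast
lemma Comp_Idm_left: "f \<in> Ar C \<Longrightarrow> Comp C (Idm C (Cod C f)) f = f"
  using cat unfolding is_cat_def by blast
lemma Comp_Idm_right: "f \<in> Ar C \<Longrightarrow> Comp C f (Idm C (Dom C f)) = f"
  using cat unfolding is_cat_def by blast

lemma no_cycle: "ms \<noteq> [] \<Longrightarrow> \<forall>m\<in>set ms. non_id C m \<Longrightarrow> composable C ms \<Longrightarrow>
   Cod C (last ms) = Dom C (hd ms) \<Longrightarrow> False"
  using dir unfolding direct_def by blast

lemma nonid_Dom_Cod: "non_id C f \<Longrightarrow> Dom C f \<noteq> Cod C f"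
  using no_cycle[of "[f]"] by auto

lemma Idm_not_nonid: "x \<in> Ob C \<Longrightarrow> \<not> non_id C (Idm C x)"
  unfolding non_id_def by simp

lemma comp_nonid:
  assumes f: "f \<in> Ar C" and g: "g \<in> Ar C" and fg: "Cod C f = Dom C g"
    and n: "non_id C f \<or> non_id C g"
  shows "non_id C (Comp C g f)"
proof -
  have cA: "Comp C g f \<in> Ar C" using Comp_Ar f g fg by blast
  show ?thesis
  proof (rule ccontr)
    assume "\<not> non_id C (Comp C g f)"
    then have e: "Comp C g f = Idm C (Dom C f)" using cA f g fg unfolding non_id_def by simp
    consider "non_id C f" "non_id C g" | "non_id C f" "\<not> non_id C g" | "\<not> non_id C f" "non_id C g"
      using n by blast
    then show False
    proof cases
      case 1
      have "Cod C g = Dom C f"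
        using Cod_Comp[OF f g fg] e Cod_Idm[OF Dom_Ar[OF f]] by simp
      then show False using no_cycle[of "[f, g]"] 1 fg by simp
    next
      case 2
      then have "g = Idm C (Cod C f)" using g fg unfolding non_id_def by simp
      then have "Comp C g f = f" using Comp_Idm_left f by simp
      then show False using e 2 unfolding non_id_def by simp
    next
      case 3
      then have fi: "f = Idm C (Dom C f)" using f unfolding non_id_def by simp
      then have "Cod C f = Dom C f" using Cod_Idm[OF Dom_Ar[OF f]] by metis
      then have "f = Idm C (Dom C g)" using fi fg by simp
      then have "Comp C g f = g" using Comp_Idm_right g by simp
      then show False using e 3 fg \<open>Cod C f = Dom C f\<close> unfolding non_id_def by simp
    qed
  qed
qed

lemma nonid_distinct:
  assumes "composable C ms" "\<forall>m\<in>set ms. non_id C m"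
  shows "distinct ms"
proof (rule ccontr)
  assume "\<not> distinct ms"
  then obtain i j where ij: "i < j" "j < length ms" "ms ! i = ms ! j"
    by (metis distinct_conv_nth linorder_neqE_nat)
  define cs where "cs = take (j - i) (drop i ms)"
  have len: "length cs = j - i" using ij unfolding cs_def by simp
  have ne: "cs \<noteq> []" using ij len by auto
  have comp: "composable C cs" unfolding cs_def using assms(1) composable_take composable_drop by blast
  have nid: "\<forall>m\<in>set cs. non_id C m" using assms(2) unfolding cs_def
    by (meson in_set_dropD in_set_takeD)
  have hd: "hd cs = ms ! i" unfolding cs_def using ij by (simp add: hd_conv_nth)
  have last: "last cs = ms ! (j - 1)" unfolding cs_def using ij ne len
    by (simp add: last_conv_nth)
  have "Cod C (ms ! (j - 1)) = Dom C (ms ! Suc (j - 1))"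
    using assms(1) ij unfolding composable_def by auto
  then have "Cod C (last cs) = Dom C (hd cs)" using last hd ij by simp
  then show False using no_cycle ne nid comp by blast
qed

lemma nonid_length:
  assumes "composable C ms" "\<forall>m\<in>set ms. non_id C m"
  shows "length ms \<le> card (Ar C)"
proof -
  have "set ms \<subseteq> Ar C" using assms(2) unfolding non_id_def by blast
  then have "card (set ms) \<le> card (Ar C)" using fin unfolding finite_cat_def by (simp add: card_mono)
  then show ?thesis using distinct_card[OF nonid_distinct[OF assms]] by simp
qed

lemma refine:
  assumes "composable C ms" "\<forall>m\<in>set ms. non_id C m"
  shows "\<exists>ns. irr_chain C ns \<and> length ms \<le> length ns"
  using assms
proof (induction "card (Ar C) - length ms" arbitrary: ms rule: less_induct)
  case less
  show ?case
  proof (cases "\<forall>m\<in>set ms. irreducible C m")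
    case True then show ?thesis using less.prems unfolding irr_chain_def by blast
  next
    case False
    then obtain k where k: "k < length ms" "\<not> irreducible C (ms ! k)" by (metis in_set_conv_nth)
    have nk: "non_id C (ms ! k)" using less.prems k by auto
    then obtain f g where fg: "f \<in> Ar C" "g \<in> Ar C" "Cod C f = Dom C g" "Comp C g f = ms ! k"
      "f \<noteq> Idm C (Dom C f)" "g \<noteq> Idm C (Dom C g)"
      using k unfolding irreducible_def by blast
    define ms' where "ms' = take k ms @ [f, g] @ drop (Suc k) ms"
    have dec: "ms = take k ms @ [ms ! k] @ drop (Suc k) ms" using k by (simp add: id_take_nth_drop)
    have c1: "composable C (take k ms)" "composable C (drop (Suc k) ms)"
      using less.prems composable_take composable_drop by blast+
    have cc: "composable C (take k ms @ [ms ! k] @ drop (Suc k) ms)" using dec less.prems(1) by simp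
    have j1: "take k ms \<noteq> [] \<Longrightarrow> Cod C (last (take k ms)) = Dom C (ms ! k)"
      using cc unfolding composable_append by simp
    have j2: "drop (Suc k) ms \<noteq> [] \<Longrightarrow> Cod C (ms ! k) = Dom C (hd (drop (Suc k) ms))"
      using cc unfolding composable_append composable_Cons by simp
    have dk: "Dom C (ms ! k) = Dom C f" "Cod C (ms ! k) = Cod C g" using fg Dom_Comp Cod_Comp by metis+
    have comp': "composable C ms'" unfolding ms'_def composable_append
      using c1 j1 j2 dk fg(3) by (simp add: composable_Cons)
    have nid': "\<forall>m\<in>set ms'. non_id C m" unfolding ms'_def using less.prems(2) fg
      unfolding non_id_def by (auto dest: in_set_takeD in_set_dropD)
    have len': "length ms' = Suc (length ms)" unfolding ms'_def using k by simp
    have "length ms' \<le> card (Ar C)" using nonid_length comp' nid' by blast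
    then have "card (Ar C) - length ms' < card (Ar C) - length ms" using len' by simp
    from less.hyps[OF this comp' nid'] len' show ?thesis by fastforce
  qed
qed

lemma irr_chain_bound: "irr_chain C ms \<Longrightarrow> length ms \<le> card (Ar C)"
  using nonid_length unfolding irr_chain_def irreducible_def by blast

lemma nonid_le_comp_length:
  assumes "composable C ms" "\<forall>m\<in>set ms. non_id C m"
  shows "length ms \<le> comp_length C"
proof -
  obtain ns where ns: "irr_chain C ns" "length ms \<le> length ns" using refine assms by blast
  have "finite {length ms | ms. irr_chain C ms}"
    by (rule finite_subset[of _ "{..card (Ar C)}"]) (auto dest: irr_chain_bound)
  then have "length ns \<le> comp_length C" unfolding comp_length_def using ns(1)
    by (intro Max_ge) auto
  then show ?thesis using ns by simp
qed


abbreviation "S n \<equiv> nondeg_strings C n"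

lemma S_props:
  assumes "s \<in> S n"
  shows "fst s \<in> Ob C" "length (snd s) = n" "set (snd s) \<subseteq> Ar C" "composable C (snd s)"
    "n > 0 \<Longrightarrow> Dom C (hd (snd s)) = fst s" "\<forall>u\<in>set (snd s). non_id C u"
  using assms unfolding nondeg_strings_def is_string_def non_id_def by auto

lemma obj_at_0[simp]: "obj_at C s 0 = fst s" by (simp add: obj_at_def)
lemma obj_at_Suc[simp]: "obj_at C s (Suc j) = Cod C (snd s ! j)" by (simp add: obj_at_def)

lemma obj_at_Ob: assumes "s \<in> S n" "j \<le> n" shows "obj_at C s j \<in> Ob C"
proof (cases j)
  case 0 then show ?thesis using S_props[OF assms(1)] by simp
next
  case (Suc k)
  then have "snd s ! k \<in> Ar C" using S_props[OF assms(1)] assms(2) by (simp add: subset_code(1))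
  then show ?thesis using Suc Cod_Ar by simp
qed

lemma Dom_nth: assumes "s \<in> S n" "j < n" shows "Dom C (snd s ! j) = obj_at C s j"
proof (cases j)
  case 0
  have "snd s \<noteq> []" using S_props(2)[OF assms(1)] assms(2) by auto
  then show ?thesis using S_props[OF assms(1)] assms(2) 0 by (simp add: hd_conv_nth)
next
  case (Suc k)
  then show ?thesis using S_props[OF assms(1)] assms(2) unfolding composable_def by simp
qed

lemma obj_at_last: assumes "s \<in> S n" "n > 0" shows "obj_at C s n = Cod C (last (snd s))"
proof -
  obtain k where k: "n = Suc k" using assms(2) gr0_conv_Suc by blast
  have "snd s \<noteq> []" using S_props(2)[OF assms(1)] k by auto
  then show ?thesis using S_props(2)[OF assms(1)] k by (simp add: last_conv_nth)
qed

lemma S_empty: assumes "n > comp_length C" shows "S n = {}"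
proof (rule ccontr)
  assume "S n \<noteq> {}"
  then obtain s where s: "s \<in> S n" by blast
  have "length (snd s) \<le> comp_length C"
    using nonid_le_comp_length S_props[OF s] by blast
  then show False using S_props(2)[OF s] assms by simp
qed

lemma finite_S: "finite (S n)"
proof -
  have "S n \<subseteq> Ob C \<times> {us. set us \<subseteq> Ar C \<and> length us = n}"
    using S_props by fastforce
  moreover have "finite (Ob C \<times> {us. set us \<subseteq> Ar C \<and> length us = n})"
    using fin unfolding finite_cat_def by (simp add: finite_lists_length_eq)
  ultimately show ?thesis using finite_subset by blast
qed

lemma fold_comp:
  assumes "m \<in> Ar C" "set ms \<subseteq> Ar C" "composable C (m # ms)"
  shows "fold (\<lambda>g acc. Comp C g acc) ms m \<in> Ar C \<and>
         Dom C (fold (\<lambda>g acc. Comp C g acc) ms m) = Dom C m \<and>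
         Cod C (fold (\<lambda>g acc. Comp C g acc) ms m) = Cod C (last (m # ms)) \<and>
         ((non_id C m \<or> (\<exists>e\<in>set ms. non_id C e)) \<longrightarrow> non_id C (fold (\<lambda>g acc. Comp C g acc) ms m))"
  using assms
proof (induction ms arbitrary: m)
  case Nil then show ?case by simp
next
  case (Cons g ms)
  have g: "g \<in> Ar C" and cmg: "Cod C m = Dom C g" and cg: "composable C (g # ms)"
    using Cons.prems by auto
  have A: "Comp C g m \<in> Ar C" using Comp_Ar Cons.prems(1) g cmg by blast
  have c2: "composable C (Comp C g m # ms)" using cg Cod_Comp[OF Cons.prems(1) g cmg]
    by (simp add: composable_Cons)
  have IH: "fold (\<lambda>g acc. Comp C g acc) ms (Comp C g m) \<in> Ar C \<and>
         Dom C (fold (\<lambda>g acc. Comp C g acc) ms (Comp C g m)) = Dom C (Comp C g m) \<and>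
         Cod C (fold (\<lambda>g acc. Comp C g acc) ms (Comp C g m)) = Cod C (last (Comp C g m # ms)) \<and>
         ((non_id C (Comp C g m) \<or> (\<exists>e\<in>set ms. non_id C e)) \<longrightarrow> non_id C (fold (\<lambda>g acc. Comp C g acc) ms (Comp C g m)))"
    using Cons.IH[OF A _ c2] Cons.prems(2) by simp
  have nid: "non_id C m \<or> non_id C g \<Longrightarrow> non_id C (Comp C g m)"
    using comp_nonid Cons.prems(1) g cmg by blast
  have lst: "Cod C (last (Comp C g m # ms)) = Cod C (last (m # g # ms))"
    using Cod_Comp[OF Cons.prems(1) g cmg] by (cases ms) auto
  show ?case using IH nid lst Dom_Comp[OF Cons.prems(1) g cmg] by auto
qed

lemma path_comp_props:
  assumes "ms \<noteq> []" "set ms \<subseteq> Ar C" "composable C ms"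
  shows "path_comp C ms \<in> Ar C" "Dom C (path_comp C ms) = Dom C (hd ms)"
    "Cod C (path_comp C ms) = Cod C (last ms)"
    "(\<exists>e\<in>set ms. non_id C e) \<Longrightarrow> non_id C (path_comp C ms)"
proof -
  obtain m rest where ms: "ms = m # rest" using assms(1) by (cases ms) auto
  have P: "fold (\<lambda>g acc. Comp C g acc) rest m \<in> Ar C \<and>
         Dom C (fold (\<lambda>g acc. Comp C g acc) rest m) = Dom C m \<and>
         Cod C (fold (\<lambda>g acc. Comp C g acc) rest m) = Cod C (last (m # rest)) \<and>
         ((non_id C m \<or> (\<exists>e\<in>set rest. non_id C e)) \<longrightarrow> non_id C (fold (\<lambda>g acc. Comp C g acc) rest m))"
    using fold_comp[of m rest] assms ms by simp
  show "path_comp C ms \<in> Ar C" "Dom C (path_comp C ms) = Dom C (hd ms)"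
    "Cod C (path_comp C ms) = Cod C (last ms)" using P ms by simp_all
  show "(\<exists>e\<in>set ms. non_id C e) \<Longrightarrow> non_id C (path_comp C ms)" using P ms by auto
qed

definition wl_list :: "('o, 'a) str \<Rightarrow> ('o, 'a) str \<Rightarrow> 'a \<Rightarrow> nat \<Rightarrow> 'a list" where
  "wl_list s t w j = drop j (snd s) @ [w] @ take j (snd t)"

lemma wl_list_props:
  assumes s: "s \<in> S n" and t: "t \<in> S n" and w: "w \<in> Ar C" "Dom C w = obj_at C s n" "Cod C w = obj_at C t 0"
    and j: "j \<le> n"
  shows "wl_list s t w j \<noteq> []" "set (wl_list s t w j) \<subseteq> Ar C" "composable C (wl_list s t w j)"
    "Dom C (hd (wl_list s t w j)) = obj_at C s j" "Cod C (last (wl_list s t w j)) = obj_at C t j"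
    "n > 0 \<or> non_id C w \<Longrightarrow> \<exists>e\<in>set (wl_list s t w j). non_id C e"
proof -
  note SS = S_props[OF s] and ST = S_props[OF t]
  show "wl_list s t w j \<noteq> []" unfolding wl_list_def by simp
  show "set (wl_list s t w j) \<subseteq> Ar C" unfolding wl_list_def using SS(3) ST(3) w(1)
    by (auto dest: in_set_dropD in_set_takeD)
  have c1: "drop j (snd s) \<noteq> [] \<Longrightarrow> Cod C (last (drop j (snd s))) = Dom C w"
  proof -
    assume ne: "drop j (snd s) \<noteq> []"
    then have "n > 0" using SS(2) by auto
    then show ?thesis using ne w(2) obj_at_last[OF s] by simp
  qed
  have c2: "take j (snd t) \<noteq> [] \<Longrightarrow> Cod C w = Dom C (hd (take j (snd t)))"
  proof -
    assume ne: "take j (snd t) \<noteq> []"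
    then have "n > 0" "j > 0" using ST(2) by auto
    then show ?thesis using w(3) ST(5) by (simp add: hd_take)
  qed
  show "composable C (wl_list s t w j)" unfolding wl_list_def composable_append
    using composable_drop[OF SS(4)] composable_take[OF ST(4)] c1 c2
    by (simp add: composable_Cons)
  show "Dom C (hd (wl_list s t w j)) = obj_at C s j"
  proof (cases "j < n")
    case True
    then have "hd (wl_list s t w j) = snd s ! j" unfolding wl_list_def using SS(2) by (simp add: hd_drop_conv_nth)
    then show ?thesis using Dom_nth[OF s True] by simp
  next
    case False
    then have "j = n" using j by simp
    then show ?thesis unfolding wl_list_def using SS(2) w(2) by simp
  qed
  show "Cod C (last (wl_list s t w j)) = obj_at C t j"
  proof (cases j)
    case 0 then show ?thesis unfolding wl_list_def using w(3) by simp
  next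
    case (Suc k)
    have ne: "take j (snd t) \<noteq> []" using Suc ST(2) j by auto
    have "last (take j (snd t)) = snd t ! k" using Suc ST(2) j ne
      by (simp add: last_conv_nth)
    then have "last (wl_list s t w j) = snd t ! k" unfolding wl_list_def using ne by simp
    then show ?thesis using Suc by simp
  qed
  show "n > 0 \<or> non_id C w \<Longrightarrow> \<exists>e\<in>set (wl_list s t w j). non_id C e"
  proof -
    assume h: "n > 0 \<or> non_id C w"
    show ?thesis
    proof (cases "non_id C w")
      case True then show ?thesis unfolding wl_list_def by simp
    next
      case False
      then have n: "n > 0" using h by simp
      show ?thesis
      proof (cases "j < n")
        case True
        then have "snd s ! j \<in> set (wl_list s t w j)" unfolding wl_list_def using SS(2)
          using Cons_nth_drop_Suc[of j "snd s"] by (metis Un_iff list.set_intros(1) set_append)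
        then show ?thesis using SS(6) SS(2) True by (metis nth_mem)
      next
        case False
        then have "j = n" using j by simp
        then have "snd t ! 0 \<in> set (wl_list s t w j)" unfolding wl_list_def using ST(2) n
          by simp
        then show ?thesis using ST(6) ST(2) n by (metis nth_mem)
      qed
    qed
  qed
qed


abbreviation "G n \<equiv> G_cat C n"

lemma G_simps[simp]: "Ob (G n) = S n" "Dom (G n) = fst" "Cod (G n) = (\<lambda>l. fst (snd l))"
  "Idm (G n) = id_ladder C" "Comp (G n) = comp_ladder C"
  by (simp_all add: G_cat_def)

lemma id_ladder_simps[simp]: "fst (id_ladder C s) = s" "fst (snd (id_ladder C s)) = s"
  "snd (snd (id_ladder C s)) = map (\<lambda>i. Idm C (obj_at C s i)) [0..<Suc (length (snd s))]"
  by (simp_all add: id_ladder_def)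

lemma comp_ladder_simps[simp]: "fst (comp_ladder C g f) = fst f" "fst (snd (comp_ladder C g f)) = fst (snd g)"
  "snd (snd (comp_ladder C g f)) = map2 (Comp C) (snd (snd g)) (snd (snd f))"
  by (simp_all add: comp_ladder_def)

lemma w_ladder_simps[simp]: "fst (w_ladder C s t w) = s" "fst (snd (w_ladder C s t w)) = t"
  "snd (snd (w_ladder C s t w)) = map (\<lambda>i. path_comp C (wl_list s t w i)) [0..<Suc (length (snd s))]"
  by (simp_all add: w_ladder_def wl_list_def)

definition lad :: "nat \<Rightarrow> ('o, 'a) lad \<Rightarrow> bool" where
  "lad n l \<longleftrightarrow> length (snd (snd l)) = Suc n \<and>
     (\<forall>j\<le>n. snd (snd l) ! j \<in> Ar C \<and> Dom C (snd (snd l) ! j) = obj_at C (fst l) j \<and>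
             Cod C (snd (snd l) ! j) = obj_at C (fst (snd l)) j)"

definition prp :: "nat \<Rightarrow> ('o, 'a) lad \<Rightarrow> bool" where
  "prp n l \<longleftrightarrow> (\<forall>j\<le>n. non_id C (snd (snd l) ! j))"

lemma prp_not_id: assumes "prp n l" "fst s \<in> Ob C" shows "l \<noteq> id_ladder C s"
proof
  assume "l = id_ladder C s"
  then have "snd (snd l) ! 0 = Idm C (fst s)" by (simp del: upt_Suc add: nth_Cons')
  then show False using assms Idm_not_nonid unfolding prp_def by fastforce
qed

lemma id_ladder_lad: assumes "s \<in> S n" shows "lad n (id_ladder C s)"
  unfolding lad_def using S_props(2)[OF assms] obj_at_Ob[OF assms]
  by (auto simp del: upt_Suc simp: nth_map_upt Idm_Ar)

lemma AR:
  assumes "l \<in> Ar (G n)"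
  shows "fst l \<in> S n \<and> fst (snd l) \<in> S n \<and> lad n l \<and>
         ((l = id_ladder C (fst l) \<and> fst (snd l) = fst l) \<or> prp n l)"
proof -
  consider (i) s where "s \<in> S n" "l = id_ladder C s"
    | (w) s t w where "s \<in> S n" "t \<in> S n" "w \<in> Ar C" "Dom C w = obj_at C s n" "Cod C w = obj_at C t 0"
        "l = w_ladder C s t w"
    using assms by (auto simp: G_cat_def)
  then show ?thesis
  proof cases
    case i then show ?thesis using id_ladder_lad by simp
  next
    case w
    note P = wl_list_props[OF w(1-5)]
    have len: "length (snd s) = n" using S_props(2)[OF w(1)] .
    have L: "lad n l" unfolding lad_def w(6) using len path_comp_props[OF P(1-3)] P(4,5)
      by (simp del: upt_Suc add: nth_map_upt)
    show ?thesis
    proof (cases "n > 0 \<or> non_id C w")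
      case True
      have "prp n l" unfolding prp_def w(6) using len path_comp_props(4)[OF P(1-3) P(6)[OF _ True]]
        by (simp del: upt_Suc add: nth_map_upt)
      then show ?thesis using L w by simp
    next
      case False
      then have n: "n = 0" and wi: "w = Idm C (Dom C w)" using w(3) unfolding non_id_def by auto
      have "snd s = []" "snd t = []" using n len S_props(2)[OF w(2)] by auto
      moreover have "fst s = fst t" using w(4,5) wi n Cod_Idm[OF Dom_Ar[OF w(3)]] by simp
      ultimately have st: "s = t" by (simp add: prod_eq_iff)
      have "l = id_ladder C s" unfolding w(6) using st \<open>snd s = []\<close> wi w(4) n
        by (simp add: w_ladder_def id_ladder_def wl_list_def)
      then show ?thesis using L w st by simp
    qed
  qed
qed

lemma COMP_id:
  assumes f: "f \<in> Ar (G n)" and g: "g \<in> Ar (G n)" and fg: "fst (snd f) = fst g"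
    and fi: "f = id_ladder C (fst f)" and gi: "g = id_ladder C (fst g)"
  shows "comp_ladder C g f = id_ladder C (fst f)"
proof -
  have sf: "fst f \<in> S n" using AR[OF f] by simp
  have e: "fst g = fst f" using fg fi by (metis id_ladder_simps(2))
  define s where "s = fst f"
  define k where "k = length (snd s)"
  have ef: "snd (snd f) = map (\<lambda>i. Idm C (obj_at C s i)) [0..<Suc k]"
    using fi unfolding s_def k_def by (metis id_ladder_simps(3))
  have eg: "snd (snd g) = map (\<lambda>i. Idm C (obj_at C s i)) [0..<Suc k]"
    using gi e unfolding s_def k_def by (metis id_ladder_simps(3))
  have cc: "\<And>y. y \<in> Ob C \<Longrightarrow> Comp C (Idm C y) (Idm C y) = Idm C y"
    using Comp_Idm_left Idm_Ar by (metis Cod_Idm)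
  have ob: "\<And>i. i < Suc k \<Longrightarrow> obj_at C s i \<in> Ob C" using obj_at_Ob[OF sf] S_props(2)[OF sf]
    unfolding s_def k_def by simp
  have "map2 (Comp C) (snd (snd g)) (snd (snd f)) = snd (snd (id_ladder C (fst f)))"
    unfolding ef eg s_def[symmetric] id_ladder_simps k_def[symmetric]
    by (rule nth_equalityI) (simp_all del: upt_Suc add: cc ob)
  moreover have "fst (snd g) = fst f" using gi e by (metis id_ladder_simps(2))
  ultimately show ?thesis unfolding comp_ladder_def id_ladder_def by simp
qed

lemma COMP_nonid:
  assumes f: "f \<in> Ar (G n)" and g: "g \<in> Ar (G n)" and fg: "fst (snd f) = fst g"
    and nb: "\<not> (f = id_ladder C (fst f) \<and> g = id_ladder C (fst g))"
  shows "lad n (comp_ladder C g f) \<and> prp n (comp_ladder C g f)"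
proof -
  note Af = AR[OF f] and Ag = AR[OF g]
  have lf: "lad n f" and lg: "lad n g" using Af Ag by auto
  have pr: "prp n f \<or> prp n g" using Af Ag nb by auto
  have ent: "\<And>j. j \<le> n \<Longrightarrow> snd (snd (comp_ladder C g f)) ! j = Comp C (snd (snd g) ! j) (snd (snd f) ! j)"
    using lf lg unfolding lad_def by simp
  have L: "lad n (comp_ladder C g f)" unfolding lad_def
  proof (intro conjI allI impI)
    show "length (snd (snd (comp_ladder C g f))) = Suc n" using lf lg unfolding lad_def by simp
  next
    fix j assume j: "j \<le> n"
    have a: "snd (snd f) ! j \<in> Ar C" "snd (snd g) ! j \<in> Ar C"
      "Cod C (snd (snd f) ! j) = Dom C (snd (snd g) ! j)"
      using lf lg j fg unfolding lad_def by auto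
    show "snd (snd (comp_ladder C g f)) ! j \<in> Ar C" using ent[OF j] Comp_Ar a by simp
    show "Dom C (snd (snd (comp_ladder C g f)) ! j) = obj_at C (fst (comp_ladder C g f)) j"
      using ent[OF j] a lf j unfolding lad_def by simp
    show "Cod C (snd (snd (comp_ladder C g f)) ! j) = obj_at C (fst (snd (comp_ladder C g f))) j"
      using ent[OF j] a lg j unfolding lad_def by simp
  qed
  have P: "prp n (comp_ladder C g f)" unfolding prp_def
  proof (intro allI impI)
    fix j assume j: "j \<le> n"
    have a: "snd (snd f) ! j \<in> Ar C" "snd (snd g) ! j \<in> Ar C"
      "Cod C (snd (snd f) ! j) = Dom C (snd (snd g) ! j)"
      using lf lg j fg unfolding lad_def by auto
    have "non_id C (snd (snd f) ! j) \<or> non_id C (snd (snd g) ! j)" using pr j unfolding prp_def by auto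
    then show "non_id C (snd (snd (comp_ladder C g f)) ! j)" using ent[OF j] comp_nonid a by simp
  qed
  show ?thesis using L P by simp
qed

lemma A4:
  assumes f: "f \<in> Ar (G n)" and g: "g \<in> Ar (G n)" and fg: "fst (snd f) = fst g"
  shows "comp_ladder C g f = id_ladder C (fst f) \<longleftrightarrow> f = id_ladder C (fst f) \<and> g = id_ladder C (fst g)"
proof
  assume h: "comp_ladder C g f = id_ladder C (fst f)"
  show "f = id_ladder C (fst f) \<and> g = id_ladder C (fst g)"
  proof (rule ccontr)
    assume nb: "\<not> (f = id_ladder C (fst f) \<and> g = id_ladder C (fst g))"
    have "prp n (comp_ladder C g f)" using COMP_nonid[OF f g fg nb] by simp
    moreover have "fst (fst f) \<in> Ob C" using AR[OF f] S_props(1) by blast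
    ultimately show False using prp_not_id h by blast
  qed
next
  assume "f = id_ladder C (fst f) \<and> g = id_ladder C (fst g)"
  then show "comp_ladder C g f = id_ladder C (fst f)" using COMP_id f g fg by blast
qed

lemma GOOD:
  assumes "a \<in> Ar (G n) \<or> (\<exists>f\<in>Ar (G n). \<exists>g\<in>Ar (G n). fst (snd f) = fst g \<and> a = comp_ladder C g f)"
  shows "fst a \<in> S n \<and> fst (snd a) \<in> S n \<and> (a = id_ladder C (fst a) \<or> (lad n a \<and> prp n a))"
  using assms
proof
  assume "a \<in> Ar (G n)" then show ?thesis using AR by blast
next
  assume "\<exists>f\<in>Ar (G n). \<exists>g\<in>Ar (G n). fst (snd f) = fst g \<and> a = comp_ladder C g f"
  then obtain f g where fg: "f \<in> Ar (G n)" "g \<in> Ar (G n)" "fst (snd f) = fst g" "a = comp_ladder C g f" by blast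
  have s: "fst a \<in> S n" "fst (snd a) \<in> S n" using AR[OF fg(1)] AR[OF fg(2)] fg(4) by simp_all
  show ?thesis
  proof (cases "f = id_ladder C (fst f) \<and> g = id_ladder C (fst g)")
    case True then show ?thesis using COMP_id[OF fg(1-3)] fg(4) s by simp
  next
    case False then show ?thesis using COMP_nonid[OF fg(1-3) False] fg(4) s by simp
  qed
qed

lemma discrete:
  assumes "2 * n > comp_length C" "a \<in> Ar (G n)"
  shows "a = id_ladder C (fst a)"
proof (rule ccontr)
  assume na: "a \<noteq> id_ladder C (fst a)"
  then obtain s t w where w: "s \<in> S n" "t \<in> S n" "w \<in> Ar C" "Dom C w = obj_at C s n" "Cod C w = obj_at C t 0"
        "a = w_ladder C s t w"
    using assms(2) by (auto simp: G_cat_def)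
  note SS = S_props[OF w(1)] and ST = S_props[OF w(2)]
  have n: "n > 0" using assms(1) by (cases n) auto
  define L where "L = snd s @ (if non_id C w then [w] else []) @ snd t"
  have ne: "snd s \<noteq> []" "snd t \<noteq> []" using SS(2) ST(2) n by auto
  have cw: "\<not> non_id C w \<Longrightarrow> Cod C w = Dom C w"
    using w(3) Cod_Idm[OF Dom_Ar[OF w(3)]] unfolding non_id_def by metis
  have e1: "Cod C (last (snd s)) = Dom C w" using obj_at_last[OF w(1) n] w(4) by simp
  have e2: "Cod C w = Dom C (hd (snd t))" using w(5) ST(5) n by simp
  have cL: "composable C L" unfolding L_def composable_append
    using SS(4) ST(4) ne e1 e2 cw by (auto simp: composable_Cons)
  have nL: "\<forall>m\<in>set L. non_id C m" unfolding L_def using SS(6) ST(6) by auto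
  have "length L \<ge> 2 * n" unfolding L_def using SS(2) ST(2) by simp
  then show False using nonid_le_comp_length[OF cL nL] assms(1) by simp
qed


lemma face_lad_simp: "face_lad C i l = (face_str C i (fst l), face_str C i (fst (snd l)),
   take i (snd (snd l)) @ drop (Suc i) (snd (snd l)))"
  by (cases l) (simp add: face_lad_def)

lemma OBJ_FACE:
  assumes t: "\<tau> \<in> S (Suc m)" and i: "i \<le> Suc m" and j: "j \<le> m"
  shows "obj_at C (face_str C i \<tau>) j = obj_at C \<tau> (if j < i then j else Suc j)"
    "length (snd (face_str C i \<tau>)) = m"
proof -
  obtain x0 us where tau: "\<tau> = (x0, us)" by (cases \<tau>)
  note TS = S_props[OF t, unfolded tau, simplified]
  have len: "length us = Suc m" using TS by simp
  have "obj_at C (face_str C i \<tau>) j = obj_at C \<tau> (if j < i then j else Suc j) \<and>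
        length (snd (face_str C i \<tau>)) = m"
  proof (cases "i = 0")
    case True
    have f: "face_str C i \<tau> = (Cod C (hd us), tl us)" using True tau by (simp add: face_str_def)
    show ?thesis
    proof (cases j)
      case 0
      have "us \<noteq> []" using len by auto
      then show ?thesis using f True len tau 0 by (simp add: hd_conv_nth)
    next
      case (Suc k) then show ?thesis using f True len tau j by (simp add: nth_tl)
    qed
  next
    case i0: False
    show ?thesis
    proof (cases "i = Suc m")
      case True
      have f: "face_str C i \<tau> = (x0, butlast us)" using True tau len by (simp add: face_str_def)
      show ?thesis
      proof (cases j)
        case 0 then show ?thesis using f True len tau by simp
      next
        case (Suc k) then show ?thesis using f True len tau j by (simp add: nth_butlast)
      qed
    next
      case False
      then have im: "0 < i" "i < Suc m" using i i0 by auto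
      have f: "face_str C i \<tau> = (x0, take (i - 1) us @ [Comp C (us ! i) (us ! (i - 1))] @ drop (Suc i) us)"
        using im tau len by (simp add: face_str_def)
      have lenf: "length (snd (face_str C i \<tau>)) = m" using f im len by simp
      show ?thesis
      proof (cases j)
        case 0 then show ?thesis using f im lenf tau by simp
      next
        case (Suc k)
        have a: "us ! (i - 1) \<in> Ar C" "us ! i \<in> Ar C" using TS len im
          by (auto simp: subset_code(1))
        have "Suc (i - 1) < length us" using im len by simp
        then have "Cod C (us ! (i - 1)) = Dom C (us ! Suc (i - 1))"
          using TS unfolding composable_def by blast
        then have cm: "Cod C (us ! (i - 1)) = Dom C (us ! i)" using im by simp
        have lt: "length (take (i - 1) us) = i - 1" using im len by simp
        consider "k < i - 1" | "k = i - 1" | "k > i - 1" by linarith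
        then show ?thesis
        proof cases
          case 1
          then have "(take (i - 1) us @ [Comp C (us ! i) (us ! (i - 1))] @ drop (Suc i) us) ! k = us ! k"
            using lt by (simp add: nth_append)
          moreover have "Suc k < i" using 1 by linarith
          ultimately show ?thesis using f Suc tau lenf im len by simp
        next
          case 2
          then have "(take (i - 1) us @ [Comp C (us ! i) (us ! (i - 1))] @ drop (Suc i) us) ! k = Comp C (us ! i) (us ! (i - 1))"
            using lt by (simp add: nth_append)
          then have e: "obj_at C (face_str C i \<tau>) j = Cod C (Comp C (us ! i) (us ! (i - 1)))"
            using f Suc by simp
          have "Suc k = i" "\<not> j < i" using 2 im Suc by auto
          moreover have "Cod C (Comp C (us ! i) (us ! (i - 1))) = Cod C (us ! i)" using Cod_Comp a cm by blast
          ultimately show ?thesis using e tau lenf Suc by simp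
        next
          case 3
          then have "(take (i - 1) us @ [Comp C (us ! i) (us ! (i - 1))] @ drop (Suc i) us) ! k
              = ([Comp C (us ! i) (us ! (i - 1))] @ drop (Suc i) us) ! (k - (i - 1))"
            using lt by (simp add: nth_append)
          also have "\<dots> = drop (Suc i) us ! (k - i)"
          proof -
            have "k - (i - 1) = Suc (k - i)" using 3 im by linarith
            then show ?thesis by simp
          qed
          also have "\<dots> = us ! Suc k" using 3 im len j Suc by (subst nth_drop) auto
          finally have "(take (i - 1) us @ [Comp C (us ! i) (us ! (i - 1))] @ drop (Suc i) us) ! k = us ! Suc k" .
          moreover have "\<not> Suc k < i" using 3 im by auto
          ultimately show ?thesis using f Suc tau lenf len im by simp
        qed
      qed
    qed
  qed
  then show "obj_at C (face_str C i \<tau>) j = obj_at C \<tau> (if j < i then j else Suc j)"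
    "length (snd (face_str C i \<tau>)) = m" by simp_all
qed

lemma face_fst_Ob: assumes t: "\<tau> \<in> S (Suc m)" and i: "i \<le> Suc m"
  shows "fst (face_str C i \<tau>) \<in> Ob C"
proof -
  have "fst (face_str C i \<tau>) = obj_at C (face_str C i \<tau>) 0" by simp
  also have "\<dots> = obj_at C \<tau> (if 0 < i then 0 else Suc 0)" using OBJ_FACE(1)[OF t i, of 0] by simp
  finally show ?thesis using obj_at_Ob[OF t, of "if 0 < i then 0 else Suc 0"] by simp
qed

lemma nth_del:
  assumes "i < length xs" "j < length xs - 1"
  shows "(take i xs @ drop (Suc i) xs) ! j = xs ! (if j < i then j else Suc j)"
proof (cases "j < i")
  case True then show ?thesis using assms by (simp add: nth_append)
next
  case False
  then have "(take i xs @ drop (Suc i) xs) ! j = drop (Suc i) xs ! (j - i)"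
    using assms by (simp add: nth_append)
  also have "\<dots> = xs ! (Suc i + (j - i))" using assms False by (subst nth_drop) auto
  finally show ?thesis using False by simp
qed

lemma length_del: "i < length xs \<Longrightarrow> length (take i xs @ drop (Suc i) xs) = length xs - 1"
  by simp

lemma FL1:
  assumes t: "\<tau> \<in> S (Suc m)" and i: "i \<le> Suc m"
  shows "face_lad C i (id_ladder C \<tau>) = id_ladder C (face_str C i \<tau>)"
proof -
  have len: "length (snd \<tau>) = Suc m" using S_props(2)[OF t] .
  have lenf: "length (snd (face_str C i \<tau>)) = m" using OBJ_FACE(2)[OF t i le0] by simp
  define L where "L = map (\<lambda>j. Idm C (obj_at C \<tau> j)) [0..<Suc (Suc m)]"
  have lL: "length L = Suc (Suc m)" unfolding L_def by simp
  have nL: "\<And>k. k < Suc (Suc m) \<Longrightarrow> L ! k = Idm C (obj_at C \<tau> k)"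
    unfolding L_def by (simp del: upt_Suc add: nth_map_upt)
  have "take i L @ drop (Suc i) L = map (\<lambda>j. Idm C (obj_at C (face_str C i \<tau>) j)) [0..<Suc m]"
  proof (rule nth_equalityI)
    show "length (take i L @ drop (Suc i) L) = length (map (\<lambda>j. Idm C (obj_at C (face_str C i \<tau>) j)) [0..<Suc m])"
      using i lL by simp
  next
    fix j assume "j < length (take i L @ drop (Suc i) L)"
    then have j: "j < Suc m" using i lL by simp
    have "(take i L @ drop (Suc i) L) ! j = L ! (if j < i then j else Suc j)"
      using nth_del[of i L j] i j lL by simp
    also have "\<dots> = Idm C (obj_at C \<tau> (if j < i then j else Suc j))" using nL j by simp
    also have "\<dots> = Idm C (obj_at C (face_str C i \<tau>) j)" using OBJ_FACE(1)[OF t i, of j] j by simp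
    also have "\<dots> = map (\<lambda>j. Idm C (obj_at C (face_str C i \<tau>) j)) [0..<Suc m] ! j"
      using j by (simp del: upt_Suc add: nth_map_upt)
    finally show "(take i L @ drop (Suc i) L) ! j = map (\<lambda>j. Idm C (obj_at C (face_str C i \<tau>) j)) [0..<Suc m] ! j" .
  qed
  then show ?thesis unfolding face_lad_simp id_ladder_simps len lenf L_def[symmetric]
    by (simp add: id_ladder_def lenf del: upt_Suc)
qed


end

definition isid :: "('o, 'a, 'z) cat_scheme \<Rightarrow> 'a \<Rightarrow> bool" where
  "isid D a \<longleftrightarrow> a = Idm D (Dom D a)"

definition SSr :: "('o, 'a, 'z) cat_scheme \<Rightarrow> ('o \<Rightarrow> nat) \<Rightarrow> 'a \<Rightarrow> 'k::field mat" where
  "SSr D d a = (if isid D a then 1\<^sub>m (d (Dom D a)) else 0\<^sub>m (d (Cod D a)) (d (Dom D a)))"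

definition SSm :: "('o, 'a, 'z) cat_scheme \<Rightarrow> ('o \<Rightarrow> nat) \<Rightarrow> ('o, 'a, 'k::field) module" where
  "SSm D d = (d, SSr D d)"

definition delta :: "'o \<Rightarrow> 'o \<Rightarrow> nat" where
  "delta t = (\<lambda>x. if x = t then 1 else 0)"

definition gcat :: "('o, 'a, 'z) cat_scheme \<Rightarrow> bool" where
  "gcat D \<longleftrightarrow> (\<forall>a\<in>Ar D. Dom D a \<in> Ob D \<and> Cod D a \<in> Ob D) \<and>
     (\<forall>x\<in>Ob D. Idm D x \<in> Ar D \<and> Dom D (Idm D x) = x \<and> Cod D (Idm D x) = x) \<and>
     (\<forall>f\<in>Ar D. \<forall>g\<in>Ar D. Cod D f = Dom D g \<longrightarrow> Dom D (Comp D g f) = Dom D f \<and>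
        Cod D (Comp D g f) = Cod D g \<and>
        (Comp D g f = Idm D (Dom D f) \<longleftrightarrow> f = Idm D (Dom D f) \<and> g = Idm D (Dom D g)))"

lemma SS_agree_module:
  assumes D: "gcat D"
    and ag: "\<And>a. a \<in> Ar D \<or> (\<exists>f\<in>Ar D. \<exists>g\<in>Ar D. Cod D f = Dom D g \<and> a = Comp D g f) \<Longrightarrow> \<rho> a = SSr D d a"
  shows "is_module (K :: 'k::field itself) D (d, \<rho>)"
proof -
  have idc: "\<And>a. a \<in> Ar D \<Longrightarrow> isid D a \<Longrightarrow> Cod D a = Dom D a"
  proof -
    fix a assume a: "a \<in> Ar D" and e: "isid D a"
    have "Dom D a \<in> Ob D" using D a unfolding gcat_def by blast
    then have "Cod D (Idm D (Dom D a)) = Dom D a" using D unfolding gcat_def by blast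
    then show "Cod D a = Dom D a" using e unfolding isid_def by metis
  qed
  have c1: "\<forall>a\<in>Ar D. \<rho> a \<in> carrier_mat (d (Cod D a)) (d (Dom D a))"
  proof
    fix a assume a: "a \<in> Ar D"
    show "\<rho> a \<in> carrier_mat (d (Cod D a)) (d (Dom D a))"
      using ag[of a] a idc[OF a] unfolding SSr_def by (cases "isid D a") auto
  qed
  have c2: "\<forall>x\<in>Ob D. \<rho> (Idm D x) = 1\<^sub>m (d x)"
  proof
    fix x assume x: "x \<in> Ob D"
    have "Idm D x \<in> Ar D" "Dom D (Idm D x) = x" using D x unfolding gcat_def by auto
    moreover then have "isid D (Idm D x)" unfolding isid_def by simp
    ultimately show "\<rho> (Idm D x) = 1\<^sub>m (d x)" using ag[of "Idm D x"] unfolding SSr_def by simp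
  qed
  have c3: "\<forall>f\<in>Ar D. \<forall>g\<in>Ar D. Cod D f = Dom D g \<longrightarrow> \<rho> (Comp D g f) = \<rho> g * \<rho> f"
  proof (intro ballI impI)
    fix f g assume f: "f \<in> Ar D" and g: "g \<in> Ar D" and fg: "Cod D f = Dom D g"
    have P: "Dom D (Comp D g f) = Dom D f" "Cod D (Comp D g f) = Cod D g"
      "Comp D g f = Idm D (Dom D f) \<longleftrightarrow> f = Idm D (Dom D f) \<and> g = Idm D (Dom D g)"
      using D f g fg unfolding gcat_def by auto
    have P3: "isid D (Comp D g f) \<longleftrightarrow> isid D f \<and> isid D g" unfolding isid_def using P(1,3) by simp
    have rc: "\<rho> (Comp D g f) = SSr D d (Comp D g f)" using ag f g fg by blast
    have rf: "\<rho> f = SSr D d f" and rg: "\<rho> g = SSr D d g" using ag f g by auto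
    show "\<rho> (Comp D g f) = \<rho> g * \<rho> f"
    proof (cases "isid D f \<and> isid D g")
      case True
      then have "Cod D f = Dom D f" using idc f by blast
      then show ?thesis using True P(1) P3 rc rf rg fg unfolding SSr_def by simp
    next
      case False
      then have nc: "\<not> isid D (Comp D g f)" using P3 by simp
      have r0: "\<rho> (Comp D g f) = 0\<^sub>m (d (Cod D g)) (d (Dom D f))" using rc nc P(1,2) unfolding SSr_def by simp
      have cf: "\<rho> f \<in> carrier_mat (d (Cod D f)) (d (Dom D f))" and cg: "\<rho> g \<in> carrier_mat (d (Cod D g)) (d (Dom D g))"
        using c1 f g by auto
      show ?thesis
      proof (cases "isid D f")
        case True
        then have "\<rho> g = 0\<^sub>m (d (Cod D g)) (d (Dom D g))" using False rg unfolding SSr_def by simp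
        then show ?thesis using r0 cf fg by simp
      next
        case False
        then have "\<rho> f = 0\<^sub>m (d (Cod D f)) (d (Dom D f))" using rf unfolding SSr_def by simp
        then show ?thesis using r0 cg fg by simp
      qed
    qed
  qed
  show ?thesis unfolding is_module_def using c1 c2 c3 by simp
qed

lemma SS_module: "gcat D \<Longrightarrow> is_module K D (SSm D d)"
  unfolding SSm_def by (rule SS_agree_module) auto

lemma SS_Mods: "gcat D \<Longrightarrow> SSm D d \<in> Mods K D"
  using SS_module unfolding Mods_def by blast

lemma zspan_plus_aux: "y \<in> zspan S \<Longrightarrow> x \<in> zspan S \<Longrightarrow> (\<lambda>b. x b + y b) \<in> zspan S"
proof (induction y rule: zspan.induct)
  case zspan_zero then show ?case by simp
next
  case (zspan_add y s)
  then have "(\<lambda>b. (\<lambda>b. x b + y b) b + s b) \<in> zspan S" using zspan.zspan_add[of "\<lambda>b. x b + y b" S s] by simp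
  then show ?case by (simp add: add.assoc)
next
  case (zspan_diff y s)
  then have "(\<lambda>b. (\<lambda>b. x b + y b) b - s b) \<in> zspan S" using zspan.zspan_diff[of "\<lambda>b. x b + y b" S s] by simp
  then show ?case by (simp add: algebra_simps)
qed

lemma zspan_plus: "x \<in> zspan S \<Longrightarrow> y \<in> zspan S \<Longrightarrow> (\<lambda>b. x b + y b) \<in> zspan S"
  using zspan_plus_aux by blast

lemma zspan_uminus: "x \<in> zspan S \<Longrightarrow> (\<lambda>b. - x b) \<in> zspan S"
proof (induction x rule: zspan.induct)
  case zspan_zero then show ?case by (simp add: zspan.zspan_zero)
next
  case (zspan_add y s)
  then have "(\<lambda>b. (\<lambda>b. - y b) b - s b) \<in> zspan S" using zspan.zspan_diff[of "\<lambda>b. - y b" S s] by simp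
  then show ?case by simp
next
  case (zspan_diff y s)
  then have "(\<lambda>b. (\<lambda>b. - y b) b + s b) \<in> zspan S" using zspan.zspan_add[of "\<lambda>b. - y b" S s] by simp
  then show ?case by simp
qed

lemma zspan_minus: "x \<in> zspan S \<Longrightarrow> y \<in> zspan S \<Longrightarrow> (\<lambda>b. x b - y b) \<in> zspan S"
  using zspan_plus[of x S "\<lambda>b. - y b"] zspan_uminus[of y S] by simp

lemma zspan_base: "s \<in> S \<Longrightarrow> s \<in> zspan S"
  using zspan.zspan_add[OF zspan.zspan_zero, of s S] by simp

lemma zspan_0: "(\<lambda>_. 0) \<in> zspan S" by (rule zspan.zspan_zero)

lemma zspan_nsmul: "x \<in> zspan S \<Longrightarrow> (\<lambda>b. int n * x b) \<in> zspan S"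
proof (induction n)
  case 0 then show ?case by (simp add: zspan_0)
next
  case (Suc n)
  have "(\<lambda>b. (\<lambda>b. int n * x b) b + x b) \<in> zspan S" using zspan_plus Suc by blast
  then show ?case by (simp add: algebra_simps)
qed

lemma zspan_smul: assumes "x \<in> zspan S" shows "(\<lambda>b. c * x b) \<in> zspan S"
proof (cases "c \<ge> 0")
  case True
  define n where "n = nat c"
  have "c = int n" using True unfolding n_def by simp
  then show ?thesis using zspan_nsmul assms by simp
next
  case False
  define n where "n = nat (- c)"
  have n: "c = - int n" using False unfolding n_def by simp
  have "(\<lambda>b. - (\<lambda>b. int n * x b) b) \<in> zspan S" using zspan_uminus zspan_nsmul assms by blast
  then show ?thesis using n by simp
qed

lemma zspan_sum: "finite A \<Longrightarrow> (\<And>s. s \<in> A \<Longrightarrow> f s \<in> zspan S) \<Longrightarrow> (\<lambda>b. \<Sum>s\<in>A. f s b) \<in> zspan S"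
proof (induction A rule: finite_induct)
  case empty then show ?case by (simp add: zspan_0)
next
  case (insert a A)
  have "(\<lambda>b. f a b + (\<lambda>b. \<Sum>s\<in>A. f s b) b) \<in> zspan S" using zspan_plus insert by blast
  then show ?case using insert by simp
qed


lemma zspan_comb: "x \<in> zspan S \<Longrightarrow> y \<in> zspan S \<Longrightarrow> (\<And>b. z b = x b + y b) \<Longrightarrow> z \<in> zspan S"
proof -
  assume "x \<in> zspan S" "y \<in> zspan S" "\<And>b. z b = x b + y b"
  then have "z = (\<lambda>b. x b + y b)" by auto
  then show ?thesis using zspan_plus \<open>x \<in> zspan S\<close> \<open>y \<in> zspan S\<close> by simp
qed

lemma zspan_comb_minus: "x \<in> zspan S \<Longrightarrow> y \<in> zspan S \<Longrightarrow> (\<And>b. z b = x b - y b) \<Longrightarrow> z \<in> zspan S"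
proof -
  assume "x \<in> zspan S" "y \<in> zspan S" "\<And>b. z b = x b - y b"
  then have "z = (\<lambda>b. x b - y b)" by auto
  then show ?thesis using zspan_minus \<open>x \<in> zspan S\<close> \<open>y \<in> zspan S\<close> by simp
qed

lemma zspan_cong: "x \<in> zspan S \<Longrightarrow> (\<And>b. z b = x b) \<Longrightarrow> z \<in> zspan S"
proof -
  assume "x \<in> zspan S" "\<And>b. z b = x b"
  then have "z = x" by auto
  then show ?thesis using \<open>x \<in> zspan S\<close> by simp
qed

lemma one_invertible: "invertible_mat (1\<^sub>m n :: 'k::field mat)"
  unfolding invertible_mat_def inverts_mat_def by (intro conjI exI[of _ "1\<^sub>m n"]) auto

lemma iso_agree:
  fixes D :: "('o, 'a, 'z) cat_scheme"
  assumes M: "M \<in> Mods K D" and o: "\<forall>x\<in>Ob D. fst N x = fst M x" and a: "\<forall>a\<in>Ar D. snd N a = snd M a"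
  shows "iso_mod D M (N :: ('o, 'a, 'k::field) module)"
  unfolding iso_mod_def
proof (intro exI[of _ "\<lambda>x. 1\<^sub>m (fst M x)"] conjI ballI)
  fix x assume "x \<in> Ob D"
  then show "1\<^sub>m (fst M x) \<in> carrier_mat (fst N x) (fst M x)" using o by simp
  show "invertible_mat (1\<^sub>m (fst M x) :: 'k mat)" by (rule one_invertible)
next
  fix b assume b: "b \<in> Ar D"
  have "snd M b \<in> carrier_mat (fst M (Cod D b)) (fst M (Dom D b))"
    using M b unfolding Mods_def is_module_def by (cases M) auto
  then show "1\<^sub>m (fst M (Cod D b)) * snd M b = snd N b * 1\<^sub>m (fst M (Dom D b))" using a b by simp
qed

lemma Rel_gen:
  fixes D :: "('o, 'a, 'z) cat_scheme"
  assumes "M \<in> Mods K D" "M1 \<in> Mods K D" "M2 \<in> Mods K D" "iso_mod D M (dsum D M1 M2)"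
  shows "(\<lambda>N. gen M N - gen M1 N - gen M2 N) \<in> Rel K D"
  unfolding Rel_def
  apply (rule zspan_base)
  apply (rule CollectI)
  apply (rule exI[of _ M], rule exI[of _ M1], rule exI[of _ M2])
  using assms by simp

lemma gcat_idc: assumes "gcat D" "a \<in> Ar D" "isid D a" shows "Cod D a = Dom D a"
proof -
  have "Dom D a \<in> Ob D" using assms unfolding gcat_def by blast
  then have "Cod D (Idm D (Dom D a)) = Dom D a" using assms(1) unfolding gcat_def by blast
  then show ?thesis using assms(3) unfolding isid_def by metis
qed

lemma u1:
  fixes D :: "('o, 'a, 'z) cat_scheme"
  assumes D: "gcat D" and a: "a \<in> Ar D" and T: "isid D a" and c: "Cod D a = Dom D a"
  shows "four_block_mat (SSr D d1 a) (0\<^sub>m (d1 (Cod D a)) (d2 (Dom D a)))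
       (0\<^sub>m (d2 (Cod D a)) (d1 (Dom D a))) (SSr D d2 a) = four_block_mat (1\<^sub>m (d1 (Dom D a))) (0\<^sub>m (d1 (Dom D a)) (d2 (Dom D a)))
       (0\<^sub>m (d2 (Dom D a)) (d1 (Dom D a))) (1\<^sub>m (d2 (Dom D a)) :: 'k::field mat)"
proof -
  have "SSr D d1 a = (1\<^sub>m (d1 (Dom D a)) :: 'k mat)" "SSr D d2 a = (1\<^sub>m (d2 (Dom D a)) :: 'k mat)"
    using T unfolding SSr_def by simp_all
  then show ?thesis unfolding c by simp
qed

lemma u2: 
  fixes D :: "('o, 'a, 'z) cat_scheme"
  assumes T: "isid D a"
  shows "1\<^sub>m (d1 (Dom D a) + d2 (Dom D a)) = (SSr D (\<lambda>x. d1 x + d2 x) a :: 'k::field mat)"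
  using T unfolding SSr_def by simp

lemma u3:
  fixes D :: "('o, 'a, 'z) cat_scheme"
  assumes F: "\<not> isid D a"
  shows "four_block_mat (SSr D d1 a) (0\<^sub>m (d1 (Cod D a)) (d2 (Dom D a)))
     (0\<^sub>m (d2 (Cod D a)) (d1 (Dom D a))) (SSr D d2 a) = (SSr D (\<lambda>x. d1 x + d2 x) a :: 'k::field mat)"
proof -
  have "four_block_mat (SSr D d1 a) (0\<^sub>m (d1 (Cod D a)) (d2 (Dom D a)))
     (0\<^sub>m (d2 (Cod D a)) (d1 (Dom D a))) (SSr D d2 a) = four_block_mat (0\<^sub>m (d1 (Cod D a)) (d1 (Dom D a))) (0\<^sub>m (d1 (Cod D a)) (d2 (Dom D a)))
     (0\<^sub>m (d2 (Cod D a)) (d1 (Dom D a))) (0\<^sub>m (d2 (Cod D a)) (d2 (Dom D a)) :: 'k mat)"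
    using F unfolding SSr_def by simp
  also have "\<dots> = 0\<^sub>m (d1 (Cod D a) + d2 (Cod D a)) (d1 (Dom D a) + d2 (Dom D a))"
    by (rule four_block_zero_mat)
  also have "\<dots> = SSr D (\<lambda>x. d1 x + d2 x) a" using F unfolding SSr_def by simp
  finally show ?thesis .
qed

lemma dsum_SS:
  fixes D :: "('o, 'a, 'z) cat_scheme"
  assumes D: "gcat D" and a: "a \<in> Ar D"
  shows "snd (dsum D (SSm D d1) (SSm D d2)) a = (SSr D (\<lambda>x. d1 x + d2 x) a :: 'k::field mat)"
proof -
  have e: "snd (dsum D (SSm D d1) (SSm D d2)) a = four_block_mat (SSr D d1 a) (0\<^sub>m (d1 (Cod D a)) (d2 (Dom D a)))
     (0\<^sub>m (d2 (Cod D a)) (d1 (Dom D a))) (SSr D d2 a)"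
    unfolding dsum_def SSm_def by simp
  show ?thesis
  proof (cases "isid D a")
    case T: True
    have c: "Cod D a = Dom D a" by (rule gcat_idc[OF D a T])
    have "snd (dsum D (SSm D d1) (SSm D d2)) a = four_block_mat (1\<^sub>m (d1 (Dom D a))) (0\<^sub>m (d1 (Dom D a)) (d2 (Dom D a)))
       (0\<^sub>m (d2 (Dom D a)) (d1 (Dom D a))) (1\<^sub>m (d2 (Dom D a)) :: 'k mat)"
      by (rule trans[OF e u1[OF D a T c]])
    also have "\<dots> = 1\<^sub>m (d1 (Dom D a) + d2 (Dom D a))" by (rule four_block_one_mat)
    also have "\<dots> = SSr D (\<lambda>x. d1 x + d2 x) a" by (rule u2[OF T])
    finally show ?thesis .
  next
    case F: False
    show ?thesis by (rule trans[OF e u3[OF F]])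
  qed
qed

lemma Rel_SS_add:
  fixes D :: "('o, 'a, 'z) cat_scheme"
  assumes D: "gcat D"
  shows "(\<lambda>N. gen (SSm D (\<lambda>x. d1 x + d2 x)) N - gen (SSm D d1) N - gen (SSm D d2) N) \<in> Rel (K :: 'k::field itself) D"
proof (rule Rel_gen)
  show "SSm D (\<lambda>x. d1 x + d2 x) \<in> Mods K D" "SSm D d1 \<in> Mods K D" "SSm D d2 \<in> Mods K D"
    by (rule SS_Mods[OF D])+
  show "iso_mod D (SSm D (\<lambda>x. d1 x + d2 x)) (dsum D (SSm D d1) (SSm D d2) :: ('o, 'a, 'k) module)"
    by (rule iso_agree[where K = K]) (use SS_Mods D dsum_SS[OF D] in \<open>auto simp: SSm_def dsum_def\<close>)
qed

abbreviation "ZZ D \<equiv> SSm D (\<lambda>_. 0)"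

lemma Rel_Z:
  fixes D :: "('o, 'a, 'z) cat_scheme"
  assumes D: "gcat D" shows "gen (ZZ D) \<in> Rel (K :: 'k::field itself) D"
proof -
  have "(\<lambda>N. gen (SSm D (\<lambda>x. 0 + 0)) N - gen (ZZ D) N - gen (ZZ D) N) \<in> Rel K D"
    using Rel_SS_add[OF D, where K = K, of "\<lambda>_. 0" "\<lambda>_. 0"] by simp
  then have "(\<lambda>N. - gen (ZZ D :: ('o, 'a, 'k) module) N) \<in> Rel K D" by simp
  then have "(\<lambda>N. - (- gen (ZZ D :: ('o, 'a, 'k) module) N)) \<in> Rel K D" unfolding Rel_def by (rule zspan_uminus)
  then show ?thesis by simp
qed

lemma fb_zero:
  assumes "A \<in> carrier_mat r c" "B \<in> carrier_mat 0 0"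
  shows "four_block_mat A (0\<^sub>m r 0) (0\<^sub>m 0 c) B = A"
  using assms by (intro eq_matI) auto

lemma Rel_agree:
  fixes D :: "('o, 'a, 'z) cat_scheme"
  assumes D: "gcat D" and M: "M \<in> Mods K D" and M': "M' \<in> Mods K D"
    and o: "\<forall>x\<in>Ob D. fst M' x = fst M x" and a: "\<forall>a\<in>Ar D. snd M' a = snd M a"
  shows "(\<lambda>N. gen M N - gen M' N) \<in> Rel (K :: 'k::field itself) D"
proof -
  have "iso_mod D M (dsum D M' (ZZ D))"
  proof (rule iso_agree[OF M])
    show "\<forall>x\<in>Ob D. fst (dsum D M' (ZZ D)) x = fst M x" using o unfolding dsum_def SSm_def by simp
    show "\<forall>b\<in>Ar D. snd (dsum D M' (ZZ D)) b = snd M b"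
    proof
      fix b assume b: "b \<in> Ar D"
      have c: "snd M' b \<in> carrier_mat (fst M' (Cod D b)) (fst M' (Dom D b))"
        using M' b unfolding Mods_def is_module_def by (cases M') auto
      have z: "(SSr D (\<lambda>_. 0) b :: 'k mat) \<in> carrier_mat 0 0" unfolding SSr_def by simp
      show "snd (dsum D M' (ZZ D)) b = snd M b"
        unfolding dsum_def SSm_def using fb_zero[OF c z] a b by simp
    qed
  qed
  then have "(\<lambda>N. gen M N - gen M' N - gen (ZZ D) N) \<in> Rel K D"
    by (rule Rel_gen[OF M M' SS_Mods[OF D]])
  then show ?thesis using Rel_Z[OF D, where K = K] unfolding Rel_def
    by (rule zspan_comb) simp
qed

lemma Rel_SS_single:
  fixes D :: "('o, 'a, 'z) cat_scheme"
  assumes D: "gcat D"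
  shows "(\<lambda>N. gen (SSm D (\<lambda>x. if x = t then k else 0)) N - int k * gen (SSm D (delta t)) N) \<in> Rel (K :: 'k::field itself) D"
proof (induction k)
  case 0 then show ?case using Rel_Z[OF D, where K = K] by simp
next
  case (Suc k)
  have e: "(\<lambda>x. if x = t then Suc k else 0) = (\<lambda>x. (if x = t then k else 0) + delta t x)"
    unfolding delta_def by auto
  have "(\<lambda>N. gen (SSm D (\<lambda>x. (if x = t then k else 0) + delta t x)) N - gen (SSm D (\<lambda>x. if x = t then k else 0)) N
      - gen (SSm D (delta t)) N) \<in> Rel K D" using Rel_SS_add[OF D, where K = K, of "\<lambda>x. if x = t then k else 0" "delta t"] by simp
  then show ?case unfolding e using Suc unfolding Rel_def
    by (rule zspan_comb) (simp add: algebra_simps)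
qed

lemma Rel_SS_decomp_aux:
  fixes D :: "('o, 'a, 'z) cat_scheme"
  assumes D: "gcat D" and A: "finite A"
  shows "(\<lambda>N. gen (SSm D (\<lambda>x. if x \<in> A then d x else 0)) N - (\<Sum>t\<in>A. int (d t) * gen (SSm D (delta t)) N)) \<in> Rel (K :: 'k::field itself) D"
  using A
proof (induction A rule: finite_induct)
  case empty then show ?case using Rel_Z[OF D, where K = K] by simp
next
  case (insert t A)
  have e: "(\<lambda>x. if x \<in> insert t A then d x else 0) = (\<lambda>x. (if x \<in> A then d x else 0) + (if x = t then d t else 0))"
    using insert(2) by auto
  have r1: "(\<lambda>N. gen (SSm D (\<lambda>x. (if x \<in> A then d x else 0) + (if x = t then d t else 0))) N
      - gen (SSm D (\<lambda>x. if x \<in> A then d x else 0)) N - gen (SSm D (\<lambda>x. if x = t then d t else 0)) N) \<in> Rel K D"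
    using Rel_SS_add[OF D, where K = K, of "\<lambda>x. if x \<in> A then d x else 0" "\<lambda>x. if x = t then d t else 0"] by simp
  note r2 = Rel_SS_single[OF D, where K = K, of t "d t"]
  have "(\<lambda>N. (gen (SSm D (\<lambda>x. (if x \<in> A then d x else 0) + (if x = t then d t else 0))) N
      - gen (SSm D (\<lambda>x. if x \<in> A then d x else 0)) N - gen (SSm D (\<lambda>x. if x = t then d t else 0)) N)
      + (gen (SSm D (\<lambda>x. if x \<in> A then d x else 0)) N - (\<Sum>t\<in>A. int (d t) * gen (SSm D (delta t)) N))) \<in> Rel K D"
    unfolding Rel_def by (rule zspan_plus[OF r1[unfolded Rel_def] insert.IH[unfolded Rel_def]])
  then show ?case unfolding e using r2 unfolding Rel_def
    by (rule zspan_comb) (simp add: insert algebra_simps)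
qed

lemma Rel_SS_decomp:
  fixes D :: "('o, 'a, 'z) cat_scheme"
  assumes D: "gcat D" and F: "finite (Ob D)"
  shows "(\<lambda>N. gen (SSm D d) N - (\<Sum>t\<in>Ob D. int (d t) * gen (SSm D (delta t)) N)) \<in> Rel (K :: 'k::field itself) D"
proof -
  have a1: "(\<lambda>N. gen (SSm D (\<lambda>x. if x \<in> Ob D then d x else 0)) N - (\<Sum>t\<in>Ob D. int (d t) * gen (SSm D (delta t)) N)) \<in> Rel K D"
    by (rule Rel_SS_decomp_aux[OF D F])
  have oa: "\<forall>a\<in>Ar D. Dom D a \<in> Ob D \<and> Cod D a \<in> Ob D" using D unfolding gcat_def by blast
  have a2: "(\<lambda>N. gen (SSm D d) N - gen (SSm D (\<lambda>x. if x \<in> Ob D then d x else 0)) N) \<in> Rel K D"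
    by (rule Rel_agree[OF D]) (use SS_Mods[OF D] oa in \<open>auto simp: SSm_def SSr_def\<close>)
  show ?thesis using a2 a1 unfolding Rel_def by (rule zspan_comb) simp
qed


subsection \<open>Finitely supported functions\<close>

definition fsum :: "('b \<Rightarrow> int) \<Rightarrow> ('b \<Rightarrow> int) \<Rightarrow> int" where
  "fsum x h = (\<Sum>M\<in>{M. x M \<noteq> 0}. x M * h M)"

lemma fsum_eq:
  assumes "finite A" "{M. x M \<noteq> 0} \<subseteq> A"
  shows "fsum x h = (\<Sum>M\<in>A. x M * h M)"
  unfolding fsum_def by (rule sum.mono_neutral_left) (use assms in auto)

lemma fsum_add:
  assumes "finite {M. x M \<noteq> 0}" "finite {M. y M \<noteq> 0}"
  shows "fsum (\<lambda>b. x b + y b) h = fsum x h + fsum y h"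
proof -
  let ?A = "{M. x M \<noteq> 0} \<union> {M. y M \<noteq> 0}"
  have f: "finite ?A" using assms by simp
  have "fsum (\<lambda>b. x b + y b) h = (\<Sum>M\<in>?A. (x M + y M) * h M)" by (rule fsum_eq[OF f]) auto
  also have "\<dots> = (\<Sum>M\<in>?A. x M * h M) + (\<Sum>M\<in>?A. y M * h M)"
    by (simp add: algebra_simps sum.distrib)
  also have "\<dots> = fsum x h + fsum y h" using fsum_eq[OF f, of x h] fsum_eq[OF f, of y h] by auto
  finally show ?thesis .
qed

lemma fsum_diff:
  assumes "finite {M. x M \<noteq> 0}" "finite {M. y M \<noteq> 0}"
  shows "fsum (\<lambda>b. x b - y b) h = fsum x h - fsum y h"
proof -
  let ?A = "{M. x M \<noteq> 0} \<union> {M. y M \<noteq> 0}"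
  have f: "finite ?A" using assms by simp
  have "fsum (\<lambda>b. x b - y b) h = (\<Sum>M\<in>?A. (x M - y M) * h M)" by (rule fsum_eq[OF f]) auto
  also have "\<dots> = (\<Sum>M\<in>?A. x M * h M) - (\<Sum>M\<in>?A. y M * h M)"
    by (simp add: algebra_simps sum_subtractf)
  also have "\<dots> = fsum x h - fsum y h" using fsum_eq[OF f, of x h] fsum_eq[OF f, of y h] by auto
  finally show ?thesis .
qed

lemma fsum_gen: "fsum (gen M) h = h M"
proof -
  have "fsum (gen M) h = (\<Sum>N\<in>{M}. gen M N * h N)" by (rule fsum_eq) (auto simp: gen_def)
  then show ?thesis by (simp add: gen_def)
qed

lemma fsum_zero: "fsum (\<lambda>_. 0) h = 0" unfolding fsum_def by simp

lemma finite_supp_zspan: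
  assumes "x \<in> zspan {gen M | M. P M}"
  shows "finite {N. x N \<noteq> 0}"
  using assms
proof (induction x rule: zspan.induct)
  case zspan_zero then show ?case by simp
next
  case (zspan_add x s)
  then obtain M where s: "s = gen M" by blast
  have "{N. x N + s N \<noteq> 0} \<subseteq> {N. x N \<noteq> 0} \<union> {M}" using s by (auto simp: gen_def)
  then show ?case using zspan_add finite_subset by auto
next
  case (zspan_diff x s)
  then obtain M where s: "s = gen M" by blast
  have "{N. x N - s N \<noteq> 0} \<subseteq> {N. x N \<noteq> 0} \<union> {M}" using s by (auto simp: gen_def)
  then show ?case using zspan_diff finite_subset by auto
qed

lemma comb_supp:
  "{M. (\<Sum>\<sigma>\<in>S. c \<sigma> * gen (F \<sigma>) M) \<noteq> (0::int)} \<subseteq> F ` S"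
proof
  fix M assume h: "M \<in> {M. (\<Sum>\<sigma>\<in>S. c \<sigma> * gen (F \<sigma>) M) \<noteq> (0::int)}"
  show "M \<in> F ` S"
  proof (rule ccontr)
    assume n: "M \<notin> F ` S"
    have "\<forall>\<sigma>\<in>S. c \<sigma> * gen (F \<sigma>) M = 0"
    proof
      fix \<sigma> assume "\<sigma> \<in> S"
      then have "M \<noteq> F \<sigma>" using n by auto
      then show "c \<sigma> * gen (F \<sigma>) M = 0" unfolding gen_def by simp
    qed
    then have "(\<Sum>\<sigma>\<in>S. c \<sigma> * gen (F \<sigma>) M) = 0" by (rule sum.neutral)
    then show False using h by simp
  qed
qed

lemma comb_fsum:
  assumes S: "finite S"
  shows "fsum (\<lambda>N. \<Sum>\<sigma>\<in>S. c \<sigma> * gen (F \<sigma>) N) h = (\<Sum>\<sigma>\<in>S. c \<sigma> * h (F \<sigma>))"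
proof -
  let ?x = "\<lambda>N. \<Sum>\<sigma>\<in>S. c \<sigma> * gen (F \<sigma>) N"
  have sub: "{M. ?x M \<noteq> 0} \<subseteq> F ` S" by (rule comb_supp)
  have "fsum ?x h = (\<Sum>M\<in>F ` S. ?x M * h M)" by (rule fsum_eq) (use S sub in auto)
  also have "\<dots> = (\<Sum>M\<in>F ` S. \<Sum>\<sigma>\<in>S. c \<sigma> * (gen (F \<sigma>) M * h M))"
    by (rule sum.cong[OF refl]) (simp add: sum_distrib_right mult.assoc)
  also have "\<dots> = (\<Sum>\<sigma>\<in>S. \<Sum>M\<in>F ` S. c \<sigma> * (gen (F \<sigma>) M * h M))" by (rule sum.swap)
  also have "\<dots> = (\<Sum>\<sigma>\<in>S. c \<sigma> * h (F \<sigma>))"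
  proof (rule sum.cong[OF refl])
    fix \<sigma> assume s: "\<sigma> \<in> S"
    have "(\<Sum>M\<in>F ` S. c \<sigma> * (gen (F \<sigma>) M * h M)) = (\<Sum>M\<in>F ` S. if M = F \<sigma> then c \<sigma> * h M else 0)"
      by (rule sum.cong) (auto simp: gen_def)
    also have "\<dots> = c \<sigma> * h (F \<sigma>)" using S s by (simp add: sum.delta')
    finally show "(\<Sum>M\<in>F ` S. c \<sigma> * (gen (F \<sigma>) M * h M)) = c \<sigma> * h (F \<sigma>)" .
  qed
  finally show ?thesis .
qed

lemma lin_ext_fsum:
  assumes f: "finite {M. x M \<noteq> 0}"
  shows "lin_ext g x N = fsum x (\<lambda>M. gen (g M) N)"
proof -
  have "lin_ext g x N = (\<Sum>M\<in>{M \<in> {M. x M \<noteq> 0}. g M = N}. x M)" unfolding lin_ext_def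
    by (rule sum.cong) auto
  also have "\<dots> = (\<Sum>M\<in>{M. x M \<noteq> 0}. if g M = N then x M else 0)"
    using f by (rule sum.inter_filter)
  also have "\<dots> = fsum x (\<lambda>M. gen (g M) N)" unfolding fsum_def
    by (rule sum.cong) (auto simp: gen_def)
  finally show ?thesis .
qed

lemma lin_ext_comb:
  assumes S: "finite S"
  shows "lin_ext g (\<lambda>N. \<Sum>\<sigma>\<in>S. c \<sigma> * gen (F \<sigma>) N) N = (\<Sum>\<sigma>\<in>S. c \<sigma> * gen (g (F \<sigma>)) N)"
proof -
  have f: "finite {M. (\<Sum>\<sigma>\<in>S. c \<sigma> * gen (F \<sigma>) M) \<noteq> 0}"
    by (rule finite_subset[OF comb_supp]) (use S in simp)
  show ?thesis unfolding lin_ext_fsum[OF f] comb_fsum[OF S] ..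
qed

subsection \<open>Decomposition over discrete categories\<close>

lemma discrete_agree:
  fixes D :: "('o, 'a, 'z) cat_scheme"
  assumes D: "gcat D" and disc: "\<forall>a\<in>Ar D. isid D a" and M: "M \<in> Mods K D"
  shows "(\<lambda>N. gen M N - gen (SSm D (fst M)) N) \<in> Rel (K :: 'k::field itself) D"
proof (rule Rel_agree[OF D M SS_Mods[OF D]])
  show "\<forall>x\<in>Ob D. fst (SSm D (fst M)) x = fst M x" by (simp add: SSm_def)
  show "\<forall>a\<in>Ar D. snd (SSm D (fst M)) a = snd M a"
  proof
    fix a assume a: "a \<in> Ar D"
    have i: "isid D a" by (rule bspec[OF disc a])
    have o: "Dom D a \<in> Ob D" using D a unfolding gcat_def by blast
    have "snd M (Idm D (Dom D a)) = 1\<^sub>m (fst M (Dom D a))"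
      using M o unfolding Mods_def is_module_def by (cases M) auto
    moreover have "snd M a = snd M (Idm D (Dom D a))" by (rule arg_cong[OF i[unfolded isid_def], of "snd M"])
    ultimately show "snd (SSm D (fst M)) a = snd M a" using i unfolding SSm_def SSr_def by simp
  qed
qed

lemma FG_discrete_decomp:
  fixes D :: "('o, 'a, 'z) cat_scheme"
  assumes D: "gcat D" and F: "finite (Ob D)" and disc: "\<forall>a\<in>Ar D. isid D a"
    and x: "x \<in> FG K D"
  shows "(\<lambda>N. x N - (\<Sum>t\<in>Ob D. fsum x (\<lambda>M. int (fst M t)) * gen (SSm D (delta t)) N)) \<in> Rel (K :: 'k::field itself) D"
  using x unfolding FG_def
proof (induction x rule: zspan.induct)
  case zspan_zero
  show ?case unfolding Rel_def by (rule zspan_cong[OF zspan_0]) (simp add: fsum_zero)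
next
  case (zspan_add x s)
  then obtain M where s: "s = gen M" and M: "M \<in> Mods K D" by blast
  have fx: "finite {N. x N \<noteq> 0}" by (rule finite_supp_zspan[OF zspan_add.hyps(1)])
  have fs: "finite {N. gen M N \<noteq> 0}" by (simp add: gen_def)
  have r1: "(\<lambda>N. gen M N - (\<Sum>t\<in>Ob D. int (fst M t) * gen (SSm D (delta t)) N)) \<in> Rel K D"
    using discrete_agree[OF D disc M] Rel_SS_decomp[OF D F, where K = K, of "fst M"] unfolding Rel_def
    by (rule zspan_comb) simp
  show ?case unfolding s fsum_add[OF fx fs] fsum_gen
    using zspan_add.IH r1 unfolding Rel_def
    by (rule zspan_comb) (simp add: algebra_simps sum.distrib)
next
  case (zspan_diff x s)
  then obtain M where s: "s = gen M" and M: "M \<in> Mods K D" by blast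
  have fx: "finite {N. x N \<noteq> 0}" by (rule finite_supp_zspan[OF zspan_diff.hyps(1)])
  have fs: "finite {N. gen M N \<noteq> 0}" by (simp add: gen_def)
  have r1: "(\<lambda>N. gen M N - (\<Sum>t\<in>Ob D. int (fst M t) * gen (SSm D (delta t)) N)) \<in> Rel K D"
    using discrete_agree[OF D disc M] Rel_SS_decomp[OF D F, where K = K, of "fst M"] unfolding Rel_def
    by (rule zspan_comb) simp
  show ?case unfolding s fsum_diff[OF fx fs] fsum_gen
    using zspan_diff.IH r1 unfolding Rel_def
    by (rule zspan_comb_minus) (simp add: algebra_simps sum_subtractf)
qed


context dcat
begin

lemma isid_G: "isid (G n) a \<longleftrightarrow> a = id_ladder C (fst a)"
  unfolding isid_def by simp

lemma gcat_G: "gcat (G n)"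
  unfolding gcat_def
proof (intro conjI ballI impI)
  fix a assume "a \<in> Ar (G n)"
  then show "Dom (G n) a \<in> Ob (G n)" "Cod (G n) a \<in> Ob (G n)" using AR by auto
next
  fix x assume x: "x \<in> Ob (G n)"
  have ar: "Ar (G n) = {id_ladder C s | s. s \<in> S n} \<union> {w_ladder C s t w | s t w. s \<in> S n \<and> t \<in> S n \<and>
             w \<in> Ar C \<and> Dom C w = obj_at C s n \<and> Cod C w = obj_at C t 0}" by (simp add: G_cat_def)
  show "Idm (G n) x \<in> Ar (G n)" unfolding ar G_simps
    by (rule UnI1, rule CollectI, rule exI[of _ x]) (use x in simp)
  show "Dom (G n) (Idm (G n) x) = x" "Cod (G n) (Idm (G n) x) = x" by simp_all
next
  fix f g assume f: "f \<in> Ar (G n)" and g: "g \<in> Ar (G n)" and fg: "Cod (G n) f = Dom (G n) g"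
  show "Dom (G n) (Comp (G n) g f) = Dom (G n) f" "Cod (G n) (Comp (G n) g f) = Cod (G n) g" by simp_all
  show "(Comp (G n) g f = Idm (G n) (Dom (G n) f)) = (f = Idm (G n) (Dom (G n) f) \<and> g = Idm (G n) (Dom (G n) g))"
    using A4[OF f g] fg by simp
qed

lemma finite_ObG: "finite (Ob (G n))" using finite_S by simp

lemma PBagree:
  assumes i: "i \<le> Suc m"
    and a: "a \<in> Ar (G (Suc m)) \<or> (\<exists>f\<in>Ar (G (Suc m)). \<exists>g\<in>Ar (G (Suc m)). Cod (G (Suc m)) f = Dom (G (Suc m)) g \<and> a = Comp (G (Suc m)) g f)"
  shows "SSr (G m) (delta \<sigma>) (face_lad C i a) = (SSr (G (Suc m)) (\<lambda>\<tau>. delta \<sigma> (face_str C i \<tau>)) a :: 'k::field mat)"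
proof -
  have gd: "fst a \<in> S (Suc m) \<and> fst (snd a) \<in> S (Suc m) \<and> (a = id_ladder C (fst a) \<or> (lad (Suc m) a \<and> prp (Suc m) a))"
    using GOOD[of a "Suc m"] a by simp
  show ?thesis
  proof (cases "a = id_ladder C (fst a)")
    case True
    obtain s where s: "s = fst a" by blast
    have as: "a = id_ladder C s" using True s by simp
    have sS: "s \<in> S (Suc m)" using gd s by simp
    have fl: "face_lad C i a = id_ladder C (face_str C i s)" unfolding as by (rule FL1[OF sS i])
    have l: "SSr (G m) (delta \<sigma>) (face_lad C i a) = (1\<^sub>m (delta \<sigma> (face_str C i s)) :: 'k mat)"
      unfolding fl SSr_def isid_G by simp
    have r: "SSr (G (Suc m)) (\<lambda>\<tau>. delta \<sigma> (face_str C i \<tau>)) a = (1\<^sub>m (delta \<sigma> (face_str C i s)) :: 'k mat)"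
      unfolding as SSr_def isid_G by simp
    show ?thesis using l r by simp
  next
    case False
    then have lp: "lad (Suc m) a" "prp (Suc m) a" using gd by auto
    have sS: "fst a \<in> S (Suc m)" using gd by simp
    define es where "es = snd (snd a)"
    have les: "length es = Suc (Suc m)" using lp(1) unfolding lad_def es_def by simp
    have e0: "(take i es @ drop (Suc i) es) ! 0 = es ! (if 0 < i then 0 else Suc 0)"
      using nth_del[of i es 0] i les by simp
    have nid: "non_id C (es ! (if 0 < i then 0 else Suc 0))" using lp(2) unfolding prp_def es_def by auto
    have ob: "fst (face_str C i (fst a)) \<in> Ob C" by (rule face_fst_Ob[OF sS i])
    have nf: "face_lad C i a \<noteq> id_ladder C (fst (face_lad C i a))"
    proof
      assume h: "face_lad C i a = id_ladder C (fst (face_lad C i a))"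
      have "snd (snd (face_lad C i a)) ! 0 = snd (snd (id_ladder C (fst (face_lad C i a)))) ! 0"
        using h by (metis (no_types))
      also have "\<dots> = Idm C (fst (face_str C i (fst a)))"
        by (simp add: face_lad_simp del: upt_Suc add: nth_Cons')
      finally have "non_id C (Idm C (fst (face_str C i (fst a))))" using nid e0
        by (simp add: face_lad_simp es_def)
      then show False using Idm_not_nonid[OF ob] by simp
    qed
    have l: "SSr (G m) (delta \<sigma>) (face_lad C i a) = (0\<^sub>m (delta \<sigma> (face_str C i (fst (snd a)))) (delta \<sigma> (face_str C i (fst a))) :: 'k mat)"
      using nf unfolding SSr_def isid_G by (simp add: face_lad_simp)
    have r: "SSr (G (Suc m)) (\<lambda>\<tau>. delta \<sigma> (face_str C i \<tau>)) a = (0\<^sub>m (delta \<sigma> (face_str C i (fst (snd a)))) (delta \<sigma> (face_str C i (fst a))) :: 'k mat)"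
      using False unfolding SSr_def isid_G by simp
    show ?thesis using l r by simp
  qed
qed

lemma PB:
  fixes K :: "'k::field itself"
  assumes i: "i \<le> Suc m"
  shows "(\<lambda>N. gen (pb_face C i (SSm (G m) (delta \<sigma>))) N -
     (\<Sum>\<tau>\<in>S (Suc m). int (delta \<sigma> (face_str C i \<tau>)) * gen (SSm (G (Suc m)) (delta \<tau>)) N)) \<in> Rel K (G (Suc m))"
proof -
  let ?chi = "\<lambda>\<tau>. delta \<sigma> (face_str C i \<tau>)"
  let ?rho = "\<lambda>a. SSr (G m) (delta \<sigma>) (face_lad C i a) :: 'k mat"
  have pbe: "pb_face C i (SSm (G m) (delta \<sigma>)) = (?chi, ?rho)"
    unfolding pb_face_def SSm_def by (simp add: o_def)
  have mod: "(?chi, ?rho) \<in> Mods K (G (Suc m))" unfolding Mods_def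
    by (rule CollectI, rule SS_agree_module[OF gcat_G]) (rule PBagree[OF i], assumption)
  have r1: "(\<lambda>N. gen (?chi, ?rho) N - gen (SSm (G (Suc m)) ?chi) N) \<in> Rel K (G (Suc m))"
  proof (rule Rel_agree[OF gcat_G mod SS_Mods[OF gcat_G]])
    show "\<forall>x\<in>Ob (G (Suc m)). fst (SSm (G (Suc m)) ?chi) x = fst (?chi, ?rho) x" by (simp add: SSm_def)
    show "\<forall>a\<in>Ar (G (Suc m)). snd (SSm (G (Suc m)) ?chi) a = snd (?chi, ?rho) a"
    proof
      fix a assume a: "a \<in> Ar (G (Suc m))"
      show "snd (SSm (G (Suc m)) ?chi) a = snd (?chi, ?rho) a"
        unfolding SSm_def snd_conv by (rule PBagree[OF i disjI1[OF a], symmetric])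
    qed
  qed
  note r2 = Rel_SS_decomp[OF gcat_G finite_ObG, where K = K, of "Suc m" ?chi]
  show ?thesis unfolding pbe using r1 r2 unfolding Rel_def
    by (rule zspan_comb) simp
qed

end


lemma triple_swap:
  fixes a :: "'i \<Rightarrow> int" and b :: "'s \<Rightarrow> int" and e :: "'i \<Rightarrow> 's \<Rightarrow> 't \<Rightarrow> int" and g :: "'t \<Rightarrow> int"
  assumes "finite I" "finite J" "finite T"
  shows "(\<Sum>i\<in>I. a i * (\<Sum>s\<in>J. b s * (\<Sum>t\<in>T. e i s t * g t))) =
         (\<Sum>t\<in>T. (\<Sum>i\<in>I. a i * (\<Sum>s\<in>J. b s * e i s t)) * g t)"
proof -
  have "(\<Sum>i\<in>I. a i * (\<Sum>s\<in>J. b s * (\<Sum>t\<in>T. e i s t * g t))) =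
        (\<Sum>i\<in>I. \<Sum>s\<in>J. \<Sum>t\<in>T. a i * b s * e i s t * g t)"
    by (simp add: sum_distrib_left mult.assoc)
  also have "\<dots> = (\<Sum>i\<in>I. \<Sum>t\<in>T. \<Sum>s\<in>J. a i * b s * e i s t * g t)"
    by (rule sum.cong[OF refl]) (rule sum.swap)
  also have "\<dots> = (\<Sum>t\<in>T. \<Sum>i\<in>I. \<Sum>s\<in>J. a i * b s * e i s t * g t)"
    by (rule sum.swap)
  also have "\<dots> = (\<Sum>t\<in>T. (\<Sum>i\<in>I. a i * (\<Sum>s\<in>J. b s * e i s t)) * g t)"
    by (simp add: sum_distrib_left sum_distrib_right mult.assoc)
  finally show ?thesis .
qed

context dcat
begin

lemma CS:
  assumes c: "\<forall>\<sigma>. \<sigma> \<notin> S m \<longrightarrow> c \<sigma> = 0"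
  shows "(\<Sum>\<sigma>\<in>S m. c \<sigma> * int (delta \<sigma> y)) = c y"
proof -
  have "(\<Sum>\<sigma>\<in>S m. c \<sigma> * int (delta \<sigma> y)) = (\<Sum>\<sigma>\<in>S m. if y = \<sigma> then c \<sigma> else 0)"
    by (rule sum.cong) (auto simp: delta_def)
  also have "\<dots> = (if y \<in> S m then c y else 0)" using finite_S by (simp add: sum.delta)
  also have "\<dots> = c y" using c[rule_format, of y] by simp
  finally show ?thesis .
qed

lemma DGR:
  fixes K :: "'k::field itself"
  assumes c: "\<forall>\<sigma>. \<sigma> \<notin> S m \<longrightarrow> c \<sigma> = 0"
  shows "(\<lambda>N. dgr C m (\<lambda>N. \<Sum>\<sigma>\<in>S m. c \<sigma> * gen (SSm (G m) (delta \<sigma>) :: (('o, 'a) str, ('o, 'a) lad, 'k) module) N) N -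
     (\<Sum>\<tau>\<in>S (Suc m). nerve_delta C m c \<tau> * gen (SSm (G (Suc m)) (delta \<tau>)) N)) \<in> Rel K (G (Suc m))"
proof -
  let ?F = "\<lambda>\<sigma>. SSm (G m) (delta \<sigma>) :: (('o, 'a) str, ('o, 'a) lad, 'k) module"
  let ?g = "\<lambda>\<tau> N. gen (SSm (G (Suc m)) (delta \<tau>) :: (('o, 'a) str, ('o, 'a) lad, 'k) module) N"
  let ?P = "\<lambda>i \<sigma> N. gen (pb_face C i (?F \<sigma>)) N"
  let ?e = "\<lambda>i \<sigma> \<tau>. int (delta \<sigma> (face_str C i \<tau>))"
  let ?x = "\<lambda>N. \<Sum>\<sigma>\<in>S m. c \<sigma> * gen (?F \<sigma>) N"
  have d1: "\<And>N. dgr C m ?x N = (\<Sum>i\<le>Suc m. (-1) ^ i * (\<Sum>\<sigma>\<in>S m. c \<sigma> * ?P i \<sigma> N))"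
  proof -
    fix N
    have l: "\<And>i. lin_ext (pb_face C i) ?x N = (\<Sum>\<sigma>\<in>S m. c \<sigma> * ?P i \<sigma> N)"
      by (rule lin_ext_comb[OF finite_S])
    show "dgr C m ?x N = (\<Sum>i\<le>Suc m. (-1) ^ i * (\<Sum>\<sigma>\<in>S m. c \<sigma> * ?P i \<sigma> N))"
      unfolding dgr_def l ..
  qed
  have q: "\<And>i. i \<in> {..Suc m} \<Longrightarrow> (\<lambda>N. (-1) ^ i * (\<Sum>\<sigma>\<in>S m. c \<sigma> * (?P i \<sigma> N - (\<Sum>\<tau>\<in>S (Suc m). ?e i \<sigma> \<tau> * ?g \<tau> N)))) \<in> Rel K (G (Suc m))"
  proof -
    fix i assume i: "i \<in> {..Suc m}"
    have "(\<lambda>N. \<Sum>\<sigma>\<in>S m. (\<lambda>\<sigma> N. c \<sigma> * (?P i \<sigma> N - (\<Sum>\<tau>\<in>S (Suc m). ?e i \<sigma> \<tau> * ?g \<tau> N))) \<sigma> N) \<in> Rel K (G (Suc m))"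
      unfolding Rel_def
    proof (rule zspan_sum[OF finite_S])
      fix \<sigma> assume "\<sigma> \<in> S m"
      show "(\<lambda>N. c \<sigma> * (?P i \<sigma> N - (\<Sum>\<tau>\<in>S (Suc m). ?e i \<sigma> \<tau> * ?g \<tau> N))) \<in> zspan {(\<lambda>N. gen M N - gen M1 N - gen M2 N) | M M1 M2.
      M \<in> Mods K (G (Suc m)) \<and> M1 \<in> Mods K (G (Suc m)) \<and> M2 \<in> Mods K (G (Suc m)) \<and> iso_mod (G (Suc m)) M (dsum (G (Suc m)) M1 M2)}"
        using zspan_smul[OF PB[of i m \<sigma>, where K = K, unfolded Rel_def], of "c \<sigma>"] i by simp
    qed
    then show "(\<lambda>N. (-1) ^ i * (\<Sum>\<sigma>\<in>S m. c \<sigma> * (?P i \<sigma> N - (\<Sum>\<tau>\<in>S (Suc m). ?e i \<sigma> \<tau> * ?g \<tau> N)))) \<in> Rel K (G (Suc m))"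
      unfolding Rel_def using zspan_smul by fastforce
  qed
  have Q: "(\<lambda>N. \<Sum>i\<le>Suc m. (\<lambda>i N. (-1) ^ i * (\<Sum>\<sigma>\<in>S m. c \<sigma> * (?P i \<sigma> N - (\<Sum>\<tau>\<in>S (Suc m). ?e i \<sigma> \<tau> * ?g \<tau> N)))) i N) \<in> Rel K (G (Suc m))"
    unfolding Rel_def by (rule zspan_sum) (use q in \<open>auto simp: Rel_def\<close>)
  have alg: "\<And>N. (\<Sum>i\<le>Suc m. (-1) ^ i * (\<Sum>\<sigma>\<in>S m. c \<sigma> * (\<Sum>\<tau>\<in>S (Suc m). ?e i \<sigma> \<tau> * ?g \<tau> N))) =
      (\<Sum>\<tau>\<in>S (Suc m). nerve_delta C m c \<tau> * ?g \<tau> N)"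
  proof -
    fix N
    have "(\<Sum>i\<le>Suc m. (-1) ^ i * (\<Sum>\<sigma>\<in>S m. c \<sigma> * (\<Sum>\<tau>\<in>S (Suc m). ?e i \<sigma> \<tau> * ?g \<tau> N))) =
      (\<Sum>\<tau>\<in>S (Suc m). (\<Sum>i\<le>Suc m. (-1) ^ i * (\<Sum>\<sigma>\<in>S m. c \<sigma> * ?e i \<sigma> \<tau>)) * ?g \<tau> N)"
      by (rule triple_swap) (simp_all add: finite_S)
    also have "\<dots> = (\<Sum>\<tau>\<in>S (Suc m). nerve_delta C m c \<tau> * ?g \<tau> N)"
    proof (rule sum.cong[OF refl])
      fix \<tau> assume t: "\<tau> \<in> S (Suc m)"
      have "(\<Sum>i\<le>Suc m. (-1) ^ i * (\<Sum>\<sigma>\<in>S m. c \<sigma> * ?e i \<sigma> \<tau>)) = (\<Sum>i\<le>Suc m. (-1) ^ i * c (face_str C i \<tau>))"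
        using CS[OF c] by simp
      also have "\<dots> = nerve_delta C m c \<tau>" using t unfolding nerve_delta_def by simp
      finally show "(\<Sum>i\<le>Suc m. (-1) ^ i * (\<Sum>\<sigma>\<in>S m. c \<sigma> * ?e i \<sigma> \<tau>)) * ?g \<tau> N = nerve_delta C m c \<tau> * ?g \<tau> N"
        by simp
    qed
    finally show "(\<Sum>i\<le>Suc m. (-1) ^ i * (\<Sum>\<sigma>\<in>S m. c \<sigma> * (\<Sum>\<tau>\<in>S (Suc m). ?e i \<sigma> \<tau> * ?g \<tau> N))) =
      (\<Sum>\<tau>\<in>S (Suc m). nerve_delta C m c \<tau> * ?g \<tau> N)" .
  qed
  show ?thesis using Q unfolding Rel_def
  proof (rule zspan_cong)
    fix N
    have "dgr C m ?x N - (\<Sum>\<tau>\<in>S (Suc m). nerve_delta C m c \<tau> * ?g \<tau> N) =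
       (\<Sum>i\<le>Suc m. (-1) ^ i * (\<Sum>\<sigma>\<in>S m. c \<sigma> * ?P i \<sigma> N)) -
       (\<Sum>i\<le>Suc m. (-1) ^ i * (\<Sum>\<sigma>\<in>S m. c \<sigma> * (\<Sum>\<tau>\<in>S (Suc m). ?e i \<sigma> \<tau> * ?g \<tau> N)))"
      using d1 alg by simp
    also have "\<dots> = (\<Sum>i\<le>Suc m. (-1) ^ i * (\<Sum>\<sigma>\<in>S m. c \<sigma> * (?P i \<sigma> N - (\<Sum>\<tau>\<in>S (Suc m). ?e i \<sigma> \<tau> * ?g \<tau> N))))"
      by (simp only: right_diff_distrib sum_subtractf)
    finally show "dgr C m ?x N - (\<Sum>\<tau>\<in>S (Suc m). nerve_delta C m c \<tau> * ?g \<tau> N) =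
      (\<Sum>i\<le>Suc m. (-1) ^ i * (\<Sum>\<sigma>\<in>S m. c \<sigma> * (?P i \<sigma> N - (\<Sum>\<tau>\<in>S (Suc m). ?e i \<sigma> \<tau> * ?g \<tau> N))))" .
  qed
qed

end


context dcat
begin

lemma SS_in_FG: "(\<lambda>N. \<Sum>\<sigma>\<in>S m. c \<sigma> * gen (SSm (G m) (delta \<sigma>) :: (('o, 'a) str, ('o, 'a) lad, 'k::field) module) N)
   \<in> FG (K :: 'k itself) (G m)"
  unfolding FG_def
proof (rule zspan_sum[OF finite_S])
  fix \<sigma> assume "\<sigma> \<in> S m"
  have "gen (SSm (G m) (delta \<sigma>) :: (('o, 'a) str, ('o, 'a) lad, 'k) module) \<in> zspan {gen M | M. M \<in> Mods K (G m)}"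
    by (rule zspan_base) (use SS_Mods[OF gcat_G, where K = K] in blast)
  then show "(\<lambda>N. c \<sigma> * gen (SSm (G m) (delta \<sigma>) :: (('o, 'a) str, ('o, 'a) lad, 'k) module) N) \<in> zspan {gen M | M. M \<in> Mods K (G m)}"
    by (rule zspan_smul)
qed

lemma dim_SS:
  assumes c: "\<forall>\<sigma>. \<sigma> \<notin> S m \<longrightarrow> c \<sigma> = 0"
  shows "dim_cochain C m (\<lambda>N. \<Sum>\<sigma>\<in>S m. c \<sigma> * gen (SSm (G m) (delta \<sigma>) :: (('o, 'a) str, ('o, 'a) lad, 'k::field) module) N) = c"
proof
  fix \<tau>
  have "fsum (\<lambda>N. \<Sum>\<sigma>\<in>S m. c \<sigma> * gen (SSm (G m) (delta \<sigma>) :: (('o, 'a) str, ('o, 'a) lad, 'k::field) module) N) (\<lambda>M. int (fst M \<tau>))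
     = (\<Sum>\<sigma>\<in>S m. c \<sigma> * int (fst (SSm (G m) (delta \<sigma>) :: (('o, 'a) str, ('o, 'a) lad, 'k::field) module) \<tau>))"
    by (rule comb_fsum[OF finite_S])
  also have "\<dots> = c \<tau>" using CS[OF c] by (simp add: SSm_def)
  finally show "dim_cochain C m (\<lambda>N. \<Sum>\<sigma>\<in>S m. c \<sigma> * gen (SSm (G m) (delta \<sigma>) :: (('o, 'a) str, ('o, 'a) lad, 'k::field) module) N) \<tau> = c \<tau>"
    unfolding dim_cochain_def fsum_def using c[rule_format, of \<tau>] by auto
qed

lemma EPI:
  fixes K :: "'k::field itself"
  assumes n: "n \<ge> 1"
  shows "comparison_epi K C n"
  unfolding comparison_epi_def
proof
  fix c assume c: "c \<in> nerve_cocycles C n"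
  have c0: "\<forall>\<sigma>. \<sigma> \<notin> S n \<longrightarrow> c \<sigma> = 0" using c unfolding nerve_cocycles_def nerve_cochains_def by blast
  have cd: "nerve_delta C n c = (\<lambda>_. 0)" using c unfolding nerve_cocycles_def by blast
  let ?x = "\<lambda>N. \<Sum>\<sigma>\<in>S n. c \<sigma> * gen (SSm (G n) (delta \<sigma>) :: (('o, 'a) str, ('o, 'a) lad, 'k::field) module) N"
  have xF: "?x \<in> FG K (G n)" by (rule SS_in_FG)
  have "dgr C n ?x \<in> Rel K (G (Suc n))"
    using DGR[OF c0, where K = K] unfolding Rel_def
    by (rule zspan_cong) (simp add: cd)
  then have xc: "?x \<in> gr_cocycles K C (G_cat C) n" unfolding gr_cocycles_def using xF by simp
  have dx: "dim_cochain C n ?x = c" by (rule dim_SS[OF c0])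
  have "(\<lambda>\<sigma>. dim_cochain C n ?x \<sigma> - c \<sigma>) = (\<lambda>_. 0)" unfolding dx by simp
  also have "\<dots> = nerve_delta C (n - 1) (\<lambda>_. 0)" unfolding nerve_delta_def by (simp add: fun_eq_iff)
  also have "\<dots> \<in> nerve_coboundaries C n" using n unfolding nerve_coboundaries_def nerve_cochains_def by simp
  finally show "\<exists>x\<in>gr_cocycles K C (G_cat C) n. (\<lambda>\<sigma>. dim_cochain C n x \<sigma> - c \<sigma>) \<in> nerve_coboundaries C n"
    using xc by blast
qed

lemma MONO:
  fixes K :: "'k::field itself"
  assumes n: "2 * n > comp_length C"
  shows "comparison_mono K C n"
  unfolding comparison_mono_def
proof (intro ballI impI)
  fix x assume xc: "x \<in> gr_cocycles K C (G_cat C) n" and dx: "dim_cochain C n x \<in> nerve_coboundaries C n"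
  have n0: "n \<noteq> 0" using n by auto
  then obtain m where m: "n = Suc m" using not0_implies_Suc by blast
  have xF: "x \<in> FG K (G n)" using xc unfolding gr_cocycles_def by simp
  obtain c where c: "c \<in> nerve_cochains C m" and dc: "dim_cochain C n x = nerve_delta C m c"
    using dx m unfolding nerve_coboundaries_def by auto
  have c0: "\<forall>\<sigma>. \<sigma> \<notin> S m \<longrightarrow> c \<sigma> = 0" using c unfolding nerve_cochains_def by blast
  let ?y = "\<lambda>N. \<Sum>\<sigma>\<in>S m. c \<sigma> * gen (SSm (G m) (delta \<sigma>) :: (('o, 'a) str, ('o, 'a) lad, 'k::field) module) N"
  have yF: "?y \<in> FG K (G m)" by (rule SS_in_FG)
  have disc: "\<forall>a\<in>Ar (G n). isid (G n) a" using discrete[OF n] isid_G by blast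
  have r1: "(\<lambda>N. x N - (\<Sum>t\<in>S n. fsum x (\<lambda>M. int (fst M t)) * gen (SSm (G n) (delta t)) N)) \<in> Rel K (G n)"
    using FG_discrete_decomp[OF gcat_G finite_ObG disc xF] by simp
  have r2: "(\<lambda>N. dgr C m ?y N - (\<Sum>\<tau>\<in>S n. nerve_delta C m c \<tau> * gen (SSm (G n) (delta \<tau>)) N)) \<in> Rel K (G n)"
    using DGR[OF c0, where K = K] m by simp
  have eq: "\<And>t. t \<in> S n \<Longrightarrow> fsum x (\<lambda>M. int (fst M t)) = nerve_delta C m c t"
  proof -
    fix t assume t: "t \<in> S n"
    have "dim_cochain C n x t = fsum x (\<lambda>M. int (fst M t))" using t unfolding dim_cochain_def fsum_def by simp
    then show "fsum x (\<lambda>M. int (fst M t)) = nerve_delta C m c t" using dc by simp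
  qed
  have r: "(\<lambda>N. x N - dgr C m ?y N) \<in> Rel K (G n)" using r1 r2 unfolding Rel_def
  proof (rule zspan_comb_minus)
    fix N
    have "(\<Sum>t\<in>S n. fsum x (\<lambda>M. int (fst M t)) * gen (SSm (G n) (delta t) :: (('o, 'a) str, ('o, 'a) lad, 'k::field) module) N)
        = (\<Sum>t\<in>S n. nerve_delta C m c t * gen (SSm (G n) (delta t) :: (('o, 'a) str, ('o, 'a) lad, 'k::field) module) N)"
      by (rule sum.cong) (simp_all add: eq)
    then show "x N - dgr C m ?y N = (x N - (\<Sum>t\<in>S n. fsum x (\<lambda>M. int (fst M t)) * gen (SSm (G n) (delta t) :: (('o, 'a) str, ('o, 'a) lad, 'k::field) module) N)) -
       (dgr C m ?y N - (\<Sum>\<tau>\<in>S n. nerve_delta C m c \<tau> * gen (SSm (G n) (delta \<tau>) :: (('o, 'a) str, ('o, 'a) lad, 'k::field) module) N))"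
      by simp
  qed
  have "x \<in> {(\<lambda>N. dgr C (n - 1) y N + r N) | y r. y \<in> FG K (G (n - 1)) \<and> r \<in> Rel K (G n)}"
    apply (rule CollectI, rule exI[of _ ?y], rule exI[of _ "\<lambda>N. x N - dgr C m ?y N"])
    using yF r m by simp
  then show "x \<in> gr_coboundaries K C (G_cat C) n"
    unfolding gr_coboundaries_def using n0 by simp
qed

end

lemma zspan_subset: "S \<subseteq> zspan T \<Longrightarrow> zspan S \<subseteq> zspan T"
proof
  fix x assume S: "S \<subseteq> zspan T" and x: "x \<in> zspan S"
  from x show "x \<in> zspan T"
  proof (induction x rule: zspan.induct)
    case zspan_zero then show ?case by (rule zspan_0)
  next
    case (zspan_add x s) then show ?case using zspan_plus S by blast
  next
    case (zspan_diff x s) then show ?case using zspan_minus S by blast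
  qed
qed

lemma empty_FG_Rel:
  assumes o: "Ob D = {}" and a: "Ar D = {}"
  shows "FG K D \<subseteq> Rel K D"
proof -
  have gs: "{gen M |M. M \<in> Mods K D} \<subseteq> Rel K D"
  proof
    fix g assume "g \<in> {gen M |M. M \<in> Mods K D}"
    then obtain M where g: "g = gen M" and M: "M \<in> Mods K D" by blast
    have "iso_mod D M (dsum D M M)" unfolding iso_mod_def using o a by simp
    then have "(\<lambda>N. gen M N - gen M N - gen M N) \<in> Rel K D" by (rule Rel_gen[OF M M M])
    then have "(\<lambda>N. - gen M N) \<in> Rel K D" by simp
    then have "(\<lambda>N. - (- gen M N)) \<in> Rel K D" unfolding Rel_def by (rule zspan_uminus)
    then show "g \<in> Rel K D" using g by simp
  qed
  show ?thesis unfolding FG_def using zspan_subset[OF gs[unfolded Rel_def]] unfolding Rel_def .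
qed

lemma dgr_zero: "dgr C n (\<lambda>_. 0) = (\<lambda>_. 0)"
  unfolding dgr_def lin_ext_def by simp

lemma vanish_empty:
  assumes n: "n \<noteq> 0" and o: "Ob (cats n) = {}" and a: "Ar (cats n) = {}"
  shows "gr_cohom_vanishes K C cats n"
  unfolding gr_cohom_vanishes_def
proof
  fix x assume "x \<in> gr_cocycles K C cats n"
  then have "x \<in> FG K (cats n)" unfolding gr_cocycles_def by simp
  then have r: "x \<in> Rel K (cats n)" using empty_FG_Rel[OF o a] by blast
  have "x = (\<lambda>N. dgr C (n - 1) (\<lambda>_. 0) N + x N)" by (simp add: dgr_zero)
  moreover have "(\<lambda>_. 0) \<in> FG K (cats (n - 1))" unfolding FG_def by (rule zspan_0)
  ultimately show "x \<in> gr_coboundaries K C cats n"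
    unfolding gr_coboundaries_def using n r by auto
qed

theorem proposition4p10:
  fixes C :: "('o, 'a) cat" and N :: nat
  assumes "is_cat C" and "finite_cat C" and "direct C"
    and "comp_length C = N" and "N \<ge> 1"
  shows "(\<forall>n>N. gr_cohom_vanishes TYPE('k::field) C (E_cat C) n \<and>
                gr_cohom_vanishes TYPE('k) C (G_cat C) n) \<and>
         (\<forall>n\<ge>N div 2 + 1. comparison_mono TYPE('k) C n \<and> comparison_epi TYPE('k) C n) \<and>
         (\<forall>n. 1 \<le> n \<and> n \<le> N div 2 \<longrightarrow> comparison_epi TYPE('k) C n)"
proof -
  interpret dcat C using assms(1-3) by unfold_locales
  have p1: "\<forall>n>N. gr_cohom_vanishes TYPE('k::field) C (E_cat C) n \<and> gr_cohom_vanishes TYPE('k) C (G_cat C) n"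
  proof (intro allI impI conjI)
    fix n assume n: "n > N"
    then have Se: "S n = {}" using S_empty assms(4) by simp
    have n0: "n \<noteq> 0" using n by simp
    show "gr_cohom_vanishes TYPE('k::field) C (E_cat C) n"
      by (rule vanish_empty[OF n0]) (simp_all add: E_cat_def Se)
    show "gr_cohom_vanishes TYPE('k::field) C (G_cat C) n"
      by (rule vanish_empty[OF n0]) (simp_all add: G_cat_def Se)
  qed
  have p2: "\<forall>n\<ge>N div 2 + 1. comparison_mono TYPE('k) C n \<and> comparison_epi TYPE('k) C n"
  proof (intro allI impI conjI)
    fix n assume n: "n \<ge> N div 2 + 1"
    then have "2 * n > comp_length C" using assms(4) by linarith
    then show "comparison_mono TYPE('k) C n" by (rule MONO)
    show "comparison_epi TYPE('k) C n" using n by (intro EPI) simp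
  qed
  have p3: "\<forall>n. 1 \<le> n \<and> n \<le> N div 2 \<longrightarrow> comparison_epi TYPE('k) C n"
    using EPI by blast
  show ?thesis using p1 p2 p3 by blast
qed

end
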